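(* Let $\mathcal M=\langle M,<,+,\{x\mapsto\lambda x\}_{\lambda\in\Lambda}\rangle$ be an ordered vector space over an ordered division ring $\Lambda$. Then every linear cell $C\subseteq M^n$ can be partitioned into finitely many product cells.
   Context: Let $\pi:M^n\to M^{n-1}$ be the projection onto the first $n-1$ coordinates; for $x\in M^n$ and $N\in M_{\ge0}$, $B_N(x)=x+[-N,N]^n$. A linear map on $X\subseteq M^n$ is one of the form $x\mapsto\lambda_1x_1+\dots+\lambda_nx_n+a$ ($\lambda_i\in\Lambda$, $a\in M$); $L(X)$ is the set of such maps and $L_\infty(X)=L(X)\cup\{\pm\infty\}$. Linear cells: $M^0$ is the linear cell in $M^0$; a linear cell in $M^{k+1}$ is either the graph $\Gamma(\alpha)$ of some $\alpha\in L(X)$ or a cylinder $(\alpha,\beta)=\{(x,y):x\in X,\alpha(x)<y<\beta(x)\}$ with $\alpha,\beta\in L_\infty(X)$, $\alpha<\beta$ on $X$, where $X\subseteq M^k$ is a linear cell. Purely unbounded sets $C\subseteq M^n$ (recursively): $C=M^0$ if $n=0$; for $n>0$, either $C$ is the graph of a function on $\pi(C)$ and $\pi(C)$ is purely unbounded, or $C$ is not such a graph, $\pi(C)$ is purely unbounded, and for every $N\in M_{\ge0}$ there is $x\in C$ with $C_{\pi(x)}\not\subseteq B_N(x_n)$, where $C_{\pi(x)}=\{t:(\pi(x),t)\in C\}$. A product cell is a linear cell $C$ of the form $C=J+D$ where $J$ is a purely unbounded linear cell, $D$ is a bounded linear cell, and every $c\in C$ can be written uniquely as $c=g+d$ with $g\in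 J$, $d\in D$. *)

theory Defs
  imports Main
begin

text \<open>Points of M^n are lists of length n.\<close>

definition ordered_vector_space ::
  "('k::{division_ring,linordered_ring_strict} \<Rightarrow> 'm::linordered_ab_group_add \<Rightarrow> 'm) \<Rightarrow> bool" where
  "ordered_vector_space sm \<longleftrightarrow>
     (\<forall>l x y. sm l (x + y) = sm l x + sm l y) \<and>
     (\<forall>l m x. sm (l + m) x = sm l x + sm m x) \<and>
     (\<forall>l m x. sm (l * m) x = sm l (sm m x)) \<and>
     (\<forall>x. sm 1 x = x) \<and>
     (\<forall>l x y. 0 < l \<longrightarrow> x < y \<longrightarrow> sm l x < sm l y)"

definition lf :: "('k \<Rightarrow> 'm::ab_group_add \<Rightarrow> 'm) \<Rightarrow> 'k list \<Rightarrow> 'm \<Rightarrow> 'm list \<Rightarrow> 'm" where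
  "lf sm ls a x = sum_list (map2 sm ls x) + a"

text \<open>Elements of L_infinity used as lower/upper bounds of cylinders:
None encodes -\<infinity> as a lower bound and +\<infinity> as an upper bound;
Some (ls, a) encodes the linear map lf sm ls a.  (A lower bound +\<infinity> or an
upper bound -\<infinity> can never satisfy alpha < beta, so nothing is lost.)\<close>
definition lower_ok :: "('k \<Rightarrow> 'm::linordered_ab_group_add \<Rightarrow> 'm) \<Rightarrow> ('k list \<times> 'm) option \<Rightarrow> 'm list \<Rightarrow> 'm \<Rightarrow> bool" where
  "lower_ok sm lo x t = (case lo of None \<Rightarrow> True | Some (ls, a) \<Rightarrow> lf sm ls a x < t)"

definition upper_ok :: "('k \<Rightarrow> 'm::linordered_ab_group_add \<Rightarrow> 'm) \<Rightarrow> ('k list \<times> 'm) option \<Rightarrow> 'm list \<Rightarrow> 'm \<Rightarrow> bool" where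
  "upper_ok sm hi x t = (case hi of None \<Rightarrow> True | Some (ls, a) \<Rightarrow> t < lf sm ls a x)"

definition bounds_lt :: "('k \<Rightarrow> 'm::linordered_ab_group_add \<Rightarrow> 'm) \<Rightarrow> ('k list \<times> 'm) option \<Rightarrow> ('k list \<times> 'm) option \<Rightarrow> 'm list \<Rightarrow> bool" where
  "bounds_lt sm lo hi x = (case (lo, hi) of
      (Some (l1, a1), Some (l2, a2)) \<Rightarrow> lf sm l1 a1 x < lf sm l2 a2 x
    | _ \<Rightarrow> True)"

inductive linear_cell :: "('k \<Rightarrow> 'm::linordered_ab_group_add \<Rightarrow> 'm) \<Rightarrow> nat \<Rightarrow> 'm list set \<Rightarrow> bool"
  for sm where
  zero: "linear_cell sm 0 {[]}"
| graph: "linear_cell sm k X \<Longrightarrow> length ls = k \<Longrightarrow>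
          linear_cell sm (Suc k) ((\<lambda>x. x @ [lf sm ls a x]) ` X)"
| cyl: "linear_cell sm k X \<Longrightarrow>
        (\<forall>(ls, a) \<in> set_option lo. length ls = k) \<Longrightarrow>
        (\<forall>(ls, a) \<in> set_option hi. length ls = k) \<Longrightarrow>
        (\<forall>x\<in>X. bounds_lt sm lo hi x) \<Longrightarrow>
        linear_cell sm (Suc k) {x @ [t] | x t. x \<in> X \<and> lower_ok sm lo x t \<and> upper_ok sm hi x t}"

definition fiber :: "'m list set \<Rightarrow> 'm list \<Rightarrow> 'm set" where
  "fiber C y = {t. y @ [t] \<in> C}"

definition is_graph :: "'m list set \<Rightarrow> bool" where
  "is_graph C \<longleftrightarrow> (\<forall>x\<in>C. \<forall>y\<in>C. butlast x = butlast y \<longrightarrow> x = y)"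

fun purely_unbounded :: "nat \<Rightarrow> 'm::linordered_ab_group_add list set \<Rightarrow> bool" where
  "purely_unbounded 0 C = (C = {[]})"
| "purely_unbounded (Suc n) C =
     ((\<forall>x\<in>C. length x = Suc n) \<and>
      ((is_graph C \<and> purely_unbounded n (butlast ` C)) \<or>
       (\<not> is_graph C \<and> purely_unbounded n (butlast ` C) \<and>
        (\<forall>N\<ge>0. \<exists>x\<in>C. \<not> fiber C (butlast x) \<subseteq> {last x - N .. last x + N}))))"

definition bounded_set :: "nat \<Rightarrow> 'm::linordered_ab_group_add list set \<Rightarrow> bool" where
  "bounded_set n D \<longleftrightarrow> (\<forall>d\<in>D. length d = n) \<and> (\<exists>N. \<forall>d\<in>D. \<forall>t\<in>set d. - N \<le> t \<and> t \<le> N)"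

definition msum :: "'m::ab_group_add list set \<Rightarrow> 'm list set \<Rightarrow> 'm list set" where
  "msum J D = {map2 (+) g d | g d. g \<in> J \<and> d \<in> D}"

definition product_cell :: "('k \<Rightarrow> 'm::linordered_ab_group_add \<Rightarrow> 'm) \<Rightarrow> nat \<Rightarrow> 'm list set \<Rightarrow> bool" where
  "product_cell sm n C \<longleftrightarrow> linear_cell sm n C \<and>
     (\<exists>J D. linear_cell sm n J \<and> purely_unbounded n J \<and>
            linear_cell sm n D \<and> bounded_set n D \<and>
            C = msum J D \<and>
            (\<forall>c\<in>C. \<exists>!p. fst p \<in> J \<and> snd p \<in> D \<and> c = map2 (+) (fst p) (snd p)))"

end

theory Submission
  imports Defs
begin


lemma one_pos_k: "(0::'k::{division_ring,linordered_ring_strict}) < 1"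
proof -
  have "(0::'k) \<le> 1 * 1" by (rule zero_le_square)
  moreover have "(1::'k) \<noteq> 0" by simp
  ultimately show ?thesis by (simp add: order_less_le)
qed

locale ovs =
  fixes sm :: "'k::{division_ring,linordered_ring_strict} \<Rightarrow> 'm::linordered_ab_group_add \<Rightarrow> 'm"
  assumes ovs: "ordered_vector_space sm"
begin

lemma sm_add1: "sm l (x + y) = sm l x + sm l y" using ovs unfolding ordered_vector_space_def by blast
lemma sm_add2: "sm (l + m) x = sm l x + sm m x" using ovs unfolding ordered_vector_space_def by blast
lemma sm_mult: "sm (l * m) x = sm l (sm m x)" using ovs unfolding ordered_vector_space_def by blast
lemma sm_one[simp]: "sm 1 x = x" using ovs unfolding ordered_vector_space_def by blast
lemma sm_mono: "0 < l \<Longrightarrow> x < y \<Longrightarrow> sm l x < sm l y" using ovs unfolding ordered_vector_space_def by blast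

lemma sm_zero1[simp]: "sm 0 x = 0"
  using sm_add2[of 0 0 x] by simp
lemma sm_zero2[simp]: "sm l 0 = 0"
  using sm_add1[of l 0 0] by simp
lemma sm_neg2: "sm l (- x) = - sm l x"
  using sm_add1[of l x "-x"] by (simp add: eq_neg_iff_add_eq_0 add.commute)
lemma sm_neg1: "sm (- l) x = - sm l x"
  using sm_add2[of l "-l" x] by (simp add: eq_neg_iff_add_eq_0 add.commute)
lemma sm_diff1: "sm l (x - y) = sm l x - sm l y"
  using sm_add1[of l x "-y"] sm_neg2 by simp
lemma sm_diff2: "sm (l - m) x = sm l x - sm m x"
  using sm_add2[of l "-m" x] sm_neg1 by simp
lemma sm_inv: "l \<noteq> 0 \<Longrightarrow> sm l (sm (inverse l) x) = x"
  using sm_mult[of l "inverse l" x] by simp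
lemma sm_inv2: "l \<noteq> 0 \<Longrightarrow> sm (inverse l) (sm l x) = x"
  using sm_mult[of "inverse l" l x] by simp
lemma sm_pos: "0 < l \<Longrightarrow> 0 < x \<Longrightarrow> 0 < sm l x"
  using sm_mono[of l 0 x] by simp
lemma sm_mono_le: "0 \<le> l \<Longrightarrow> x \<le> y \<Longrightarrow> sm l x \<le> sm l y"
  by (cases "l = 0"; cases "x = y") (auto intro!: less_imp_le sm_mono)
lemma sm_neg_mono: "l < 0 \<Longrightarrow> x < y \<Longrightarrow> sm l y < sm l x"
  using sm_mono[of "-l" x y] sm_neg1 by simp
lemma sm_mono_iff: "0 < l \<Longrightarrow> sm l x < sm l y \<longleftrightarrow> x < y"
  by (metis not_less_iff_gr_or_eq sm_mono less_asym)
lemma inv_pos: "0 < (l::'k) \<Longrightarrow> 0 < inverse l"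
proof -
  assume l: "0 < l"
  have ne: "l \<noteq> 0" using l by simp
  show ?thesis
  proof (rule ccontr)
    assume "\<not> 0 < inverse l"
    hence "inverse l \<le> 0" by simp
    hence "l * inverse l \<le> l * 0" using l by (intro mult_left_mono) auto
    hence "(1::'k) \<le> 0" using ne by simp
    thus False using one_pos_k[where 'k='k] by simp
  qed
qed
lemma inv_neg: "(l::'k) < 0 \<Longrightarrow> inverse l < 0"
  using inv_pos[of "-l"] by (simp add: inverse_minus_eq)

definition half :: "'m \<Rightarrow> 'm" where "half x = sm (inverse (1 + 1)) x"
lemma two_pos: "(0::'k) < 1 + 1" by (rule add_pos_pos[OF one_pos_k one_pos_k])
lemma half_add: "half x + half x = x"
proof -
  have "half x + half x = sm (inverse (1+1) + inverse (1+1)) x" by (simp add: half_def sm_add2)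
  also have "inverse (1+1) + inverse (1+1) = (1::'k)"
  proof -
    have ne: "(1+1::'k) \<noteq> 0" using two_pos by simp
    have "inverse (1+1) + inverse (1+1) = (1+1) * inverse (1+1::'k)" by (simp only: distrib_right mult_1_left)
    thus ?thesis using ne by (metis right_inverse)
  qed
  finally show ?thesis by simp
qed
lemma half_pos: "0 < x \<Longrightarrow> 0 < half x"
  unfolding half_def using sm_pos inv_pos two_pos by blast

lemma dense_half: "a < b \<Longrightarrow> a < a + half (b - a) \<and> a + half (b - a) < b"
proof -
  assume "a < b"
  hence p: "0 < half (b - a)" using half_pos by simp
  have "a + half (b - a) + half (b-a) = b" using half_add[of "b-a"] by (simp add: algebra_simps)
  thus ?thesis using p by (metis add.commute add_strict_left_mono less_add_same_cancel1)
qed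

lemma dense_ex: "(a::'m) < b \<Longrightarrow> \<exists>t. a < t \<and> t < b"
  by (drule dense_half) blast

end


context ovs begin

lemma lf_Cons: "lf sm (l # ls) a (y # ys) = sm l y + lf sm ls a ys"
  by (simp add: lf_def add.assoc)
lemma lf_Nil: "lf sm [] a ys = a" "lf sm ls a [] = a"
  by (simp_all add: lf_def)
lemma lf_0: "lf sm ls a x = lf sm ls 0 x + a"
  by (simp add: lf_def)

lemma lf_append: "length ls = length x \<Longrightarrow> lf sm (ls@[c]) a (x@[t]) = lf sm ls a x + sm c t"
  by (simp add: lf_def algebra_simps)

lemma lf_add: "length ls = length g \<Longrightarrow> length g = length d \<Longrightarrow>
   lf sm ls a (map2 (+) g d) = lf sm ls 0 g + lf sm ls a d"
proof (induction ls arbitrary: g d)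
  case Nil then show ?case by (simp add: lf_def)
next
  case (Cons l ls)
  then obtain y g' z d' where "g = y # g'" "d = z # d'" by (metis Suc_length_conv)
  with Cons show ?case by (simp add: lf_Cons sm_add1 algebra_simps)
qed

lemma lf_plus_coef: "length ls1 = length ls2 \<Longrightarrow>
   lf sm (map2 (+) ls1 ls2) (a1 + a2) x = lf sm ls1 a1 x + lf sm ls2 a2 x"
proof (induction ls1 arbitrary: ls2 x a1 a2)
  case Nil then show ?case by (simp add: lf_def)
next
  case (Cons l ls)
  then obtain l2 ls2' where l2: "ls2 = l2 # ls2'" by (metis Suc_length_conv length_Cons)
  show ?case
  proof (cases x)
    case Nil then show ?thesis by (simp add: lf_def l2)
  next
    case (Cons y ys)
    have "lf sm (map2 (+) ls ls2') (a1 + a2) ys = lf sm ls a1 ys + lf sm ls2' a2 ys"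
      using Cons.IH Cons.prems l2 by simp
    then show ?thesis using l2 Cons by (simp add: lf_Cons sm_add2 algebra_simps)
  qed
qed

lemma lf_smul_coef: "lf sm (map (\<lambda>m. l * m) ls) (sm l a) x = sm l (lf sm ls a x)"
proof (induction ls arbitrary: x a)
  case Nil then show ?case by (simp add: lf_def)
next
  case (Cons m ls)
  show ?case
  proof (cases x)
    case Nil then show ?thesis by (simp add: lf_def)
  next
    case (Cons y ys)
    have "lf sm (map ((*) l) ls) (sm l a) ys = sm l (lf sm ls a ys)" using Cons.IH by simp
    then show ?thesis using Cons by (simp add: lf_Cons sm_add1 sm_mult)
  qed
qed

lemma lf_zero_coef: "lf sm (replicate k 0) a x = a"
proof (induction k arbitrary: x)
  case 0 then show ?case by (simp add: lf_def)
next
  case (Suc k) then show ?case by (cases x) (simp_all add: lf_Cons lf_Nil)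
qed

definition aff :: "nat \<Rightarrow> ('m list \<Rightarrow> 'm) \<Rightarrow> bool" where
  "aff m f \<longleftrightarrow> (\<exists>ls a. length ls = m \<and> (\<forall>x. length x = m \<longrightarrow> f x = lf sm ls a x))"

lemma aff_cong: "aff m f \<Longrightarrow> (\<And>x. length x = m \<Longrightarrow> f x = g x) \<Longrightarrow> aff m g"
  unfolding aff_def by metis

lemma aff_lf: "length ls = m \<Longrightarrow> aff m (lf sm ls a)"
  unfolding aff_def by blast

lemma aff_const: "aff m (\<lambda>x. c)"
  unfolding aff_def by (rule exI[of _ "replicate m 0"], rule exI[of _ c]) (simp add: lf_zero_coef)

lemma aff_add: "aff m f \<Longrightarrow> aff m g \<Longrightarrow> aff m (\<lambda>x. f x + g x)"
  unfolding aff_def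
proof (elim exE conjE)
  fix ls1 a1 ls2 a2
  assume "length ls1 = m" "\<forall>x. length x = m \<longrightarrow> f x = lf sm ls1 a1 x"
    "length ls2 = m" "\<forall>x. length x = m \<longrightarrow> g x = lf sm ls2 a2 x"
  then show "\<exists>ls a. length ls = m \<and> (\<forall>x. length x = m \<longrightarrow> f x + g x = lf sm ls a x)"
    by (intro exI[of _ "map2 (+) ls1 ls2"] exI[of _ "a1 + a2"]) (simp add: lf_plus_coef)
qed

lemma aff_smul: "aff m f \<Longrightarrow> aff m (\<lambda>x. sm l (f x))"
  unfolding aff_def
proof (elim exE conjE)
  fix ls1 a1
  assume "length ls1 = m" "\<forall>x. length x = m \<longrightarrow> f x = lf sm ls1 a1 x"
  then show "\<exists>ls a. length ls = m \<and> (\<forall>x. length x = m \<longrightarrow> sm l (f x) = lf sm ls a x)"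
    by (intro exI[of _ "map (\<lambda>m. l * m) ls1"] exI[of _ "sm l a1"]) (simp add: lf_smul_coef)
qed

lemma aff_neg: "aff m f \<Longrightarrow> aff m (\<lambda>x. - f x)"
  using aff_smul[of m f "-1"] by (simp add: sm_neg1)

lemma aff_diff: "aff m f \<Longrightarrow> aff m g \<Longrightarrow> aff m (\<lambda>x. f x - g x)"
  using aff_add[OF _ aff_neg[of m g]] by simp

lemma aff_butlast: "aff k f \<Longrightarrow> aff (Suc k) (\<lambda>y. f (butlast y))"
  unfolding aff_def
proof (elim exE conjE)
  fix ls1 a1
  assume h: "length ls1 = k" "\<forall>x. length x = k \<longrightarrow> f x = lf sm ls1 a1 x"
  show "\<exists>ls a. length ls = Suc k \<and> (\<forall>x. length x = Suc k \<longrightarrow> f (butlast x) = lf sm ls a x)"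
  proof (intro exI[of _ "ls1 @ [0]"] exI[of _ a1] conjI allI impI)
    fix x :: "'m list" assume x: "length x = Suc k"
    then have "x = butlast x @ [last x]" by (metis append_butlast_last_id list.size(3) nat.distinct(1))
    then have "lf sm (ls1 @ [0]) a1 x = lf sm ls1 a1 (butlast x) + sm 0 (last x)"
      using lf_append[of ls1 "butlast x" 0 a1 "last x"] h x by simp
    then show "f (butlast x) = lf sm (ls1 @ [0]) a1 x" using h x by simp
  qed (use h in simp)
qed

lemma aff_last: "aff (Suc k) (\<lambda>y. last y)"
  unfolding aff_def
proof (intro exI[of _ "replicate k 0 @ [1]"] exI[of _ 0] conjI allI impI)
  fix x :: "'m list" assume x: "length x = Suc k"
  then have "x = butlast x @ [last x]" by (metis append_butlast_last_id list.size(3) nat.distinct(1))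
  then have "lf sm (replicate k 0 @ [1]) 0 x = lf sm (replicate k 0) 0 (butlast x) + sm 1 (last x)"
    using lf_append[of "replicate k 0" "butlast x" 1 0 "last x"] x by simp
  then show "last x = lf sm (replicate k 0 @ [1]) 0 x" by (simp add: lf_zero_coef)
qed simp

lemma aff_proj: "i < m \<Longrightarrow> aff m (\<lambda>y. y ! i)"
proof (induction m arbitrary: i)
  case 0 then show ?case by simp
next
  case (Suc k)
  show ?case
  proof (cases "i < k")
    case True
    have "aff (Suc k) (\<lambda>y. butlast y ! i)" using aff_butlast[OF Suc.IH[OF True]] .
    then show ?thesis
      by (rule aff_cong) (metis True length_butlast diff_Suc_1 nth_butlast)
  next
    case False
    then have "i = k" using Suc.prems by simp
    show ?thesis using aff_last[of k]
      by (rule aff_cong) (metis \<open>i = k\<close> last_conv_nth diff_Suc_1 list.size(3) nat.distinct(1))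
  qed
qed

lemma aff_sum: "finite I \<Longrightarrow> (\<And>i. i \<in> I \<Longrightarrow> aff m (f i)) \<Longrightarrow> aff m (\<lambda>x. \<Sum>i\<in>I. f i x)"
proof (induction I rule: finite_induct)
  case empty then show ?case by (simp add: aff_const)
next
  case (insert j I)
  then show ?case by (simp add: aff_add)
qed

lemma sum_list_map2: "length xs = length ys \<Longrightarrow>
   sum_list (map2 f xs ys) = (\<Sum>i<length xs. f (xs ! i) (ys ! i))"
  by (simp add: sum_list_sum_nth atLeast0LessThan)

definition affv :: "nat \<Rightarrow> nat \<Rightarrow> ('m list \<Rightarrow> 'm list) \<Rightarrow> bool" where
  "affv m k F \<longleftrightarrow> (\<forall>y. length y = m \<longrightarrow> length (F y) = k) \<and> (\<forall>i<k. aff m (\<lambda>y. F y ! i))"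

lemma aff_comp: "aff k f \<Longrightarrow> affv m k F \<Longrightarrow> aff m (\<lambda>y. f (F y))"
proof -
  assume "aff k f" "affv m k F"
  then obtain ls a where ls: "length ls = k" "\<forall>x. length x = k \<longrightarrow> f x = lf sm ls a x"
    and F: "\<forall>y. length y = m \<longrightarrow> length (F y) = k" "\<forall>i<k. aff m (\<lambda>y. F y ! i)"
    unfolding aff_def affv_def by blast
  have "aff m (\<lambda>y. (\<Sum>i\<in>{..<k}. sm (ls ! i) (F y ! i)) + a)"
    by (intro aff_add aff_sum aff_smul aff_const) (use F in auto)
  then show ?thesis
  proof (rule aff_cong)
    fix y :: "'m list" assume "length y = m"
    then have "length (F y) = k" using F by simp
    then show "(\<Sum>i<k. sm (ls ! i) (F y ! i)) + a = f (F y)"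
      using ls by (simp add: lf_def sum_list_map2)
  qed
qed

lemma aff_split: "aff (Suc k) f \<Longrightarrow> \<exists>f0 c. aff k f0 \<and> (\<forall>x t. length x = k \<longrightarrow> f (x @ [t]) = f0 x + sm c t)"
proof -
  assume "aff (Suc k) f"
  then obtain ls a where ls: "length ls = Suc k" "\<forall>x. length x = Suc k \<longrightarrow> f x = lf sm ls a x"
    unfolding aff_def by blast
  then have e: "ls = butlast ls @ [last ls]" by (metis append_butlast_last_id list.size(3) nat.distinct(1))
  show ?thesis
  proof (intro exI conjI allI impI)
    show "aff k (lf sm (butlast ls) a)" by (rule aff_lf) (simp add: ls)
    fix x :: "'m list" and t assume "length x = k"
    then show "f (x @ [t]) = lf sm (butlast ls) a x + sm (last ls) t"
      using ls lf_append[of "butlast ls" x "last ls" a t] e by (metis length_append_singleton length_butlast diff_Suc_1)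
  qed
qed

lemma aff_ex: "aff m f \<Longrightarrow> \<exists>ls a. length ls = m \<and> (\<forall>x. length x = m \<longrightarrow> f x = lf sm ls a x)"
  unfolding aff_def by blast

end


definition ext :: "'m list set \<Rightarrow> ('m list \<Rightarrow> 'm \<Rightarrow> bool) \<Rightarrow> 'm list set" where
  "ext X P = {x @ [t] | x t. x \<in> X \<and> P x t}"

lemma mem_ext_app[simp]: "y @ [t] \<in> ext X P \<longleftrightarrow> y \<in> X \<and> P y t"
  unfolding ext_def by auto

lemma mem_ext: "z \<in> ext X P \<longleftrightarrow> z \<noteq> [] \<and> butlast z \<in> X \<and> P (butlast z) (last z)"
proof
  assume "z \<in> ext X P" then obtain x t where "z = x@[t]" "x\<in>X" "P x t" unfolding ext_def by blast
  then show "z \<noteq> [] \<and> butlast z \<in> X \<and> P (butlast z) (last z)" by simp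
next
  assume h: "z \<noteq> [] \<and> butlast z \<in> X \<and> P (butlast z) (last z)"
  then have "z = butlast z @ [last z]" by simp
  then show "z \<in> ext X P" using h mem_ext_app by metis
qed
lemma ext_Int: "ext A R \<inter> ext B R = ext (A \<inter> B) R"
  by (auto simp: mem_ext)
lemma butlast_ext: "(\<And>x. x \<in> X \<Longrightarrow> \<exists>t. P x t) \<Longrightarrow> butlast ` ext X P = X"
proof
  show "butlast ` ext X P \<subseteq> X" by (auto simp: mem_ext)
  assume h: "\<And>x. x \<in> X \<Longrightarrow> \<exists>t. P x t"
  show "X \<subseteq> butlast ` ext X P"
  proof
    fix x assume "x \<in> X" then obtain t where "P x t" using h by blast
    then have "x @ [t] \<in> ext X P" using \<open>x \<in> X\<close> by simp
    then show "x \<in> butlast ` ext X P" by (metis butlast_snoc image_eqI)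
  qed
qed
lemma ext_Union: "ext (\<Union>P) R = (\<Union>A\<in>P. ext A R)"
  by (auto simp: mem_ext)
lemma ext_Un_pred: "ext A (\<lambda>x t. P x t \<or> Q x t) = ext A P \<union> ext A Q"
  by (auto simp: mem_ext)
lemma ext_mono: "A \<subseteq> B \<Longrightarrow> ext A R \<subseteq> ext B R"
  by (auto simp: mem_ext)
lemma ext_cong: "(\<And>x t. x \<in> X \<Longrightarrow> P x t \<longleftrightarrow> Q x t) \<Longrightarrow> ext X P = ext X Q"
  by (auto simp: mem_ext)

lemma fiber_ext: "fiber (ext X P) y = {t. y \<in> X \<and> P y t}"
  unfolding fiber_def by simp

lemma cell_len: "linear_cell sm n C \<Longrightarrow> x \<in> C \<Longrightarrow> length x = n"
  by (induction arbitrary: x rule: linear_cell.induct) auto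

lemma cell_graph_ext: "(\<lambda>x. x @ [f x]) ` X = ext X (\<lambda>x t. t = f x)"
  unfolding ext_def by blast

lemma cell_cyl_ext: "{x @ [t] | x t. x \<in> X \<and> lower_ok sm lo x t \<and> upper_ok sm hi x t}
   = ext X (\<lambda>x t. lower_ok sm lo x t \<and> upper_ok sm hi x t)"
  unfolding ext_def by blast

context ovs begin

lemma cell_graph: "linear_cell sm k X \<Longrightarrow> aff k f \<Longrightarrow> linear_cell sm (Suc k) (ext X (\<lambda>x t. t = f x))"
proof -
  assume X: "linear_cell sm k X" and f: "aff k f"
  then obtain ls a where ls: "length ls = k" "\<forall>x. length x = k \<longrightarrow> f x = lf sm ls a x"
    using aff_ex by blast
  have "ext X (\<lambda>x t. t = f x) = (\<lambda>x. x @ [lf sm ls a x]) ` X"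
    unfolding cell_graph_ext using ls cell_len[OF X] by (intro ext_cong) auto
  then show ?thesis using linear_cell.graph[OF X ls(1)] by simp
qed

lemma cell_cyl_gen: "linear_cell sm k X \<Longrightarrow>
   (\<forall>(ls, a) \<in> set_option lo. length ls = k) \<Longrightarrow>
   (\<forall>(ls, a) \<in> set_option hi. length ls = k) \<Longrightarrow>
   (\<forall>x\<in>X. bounds_lt sm lo hi x) \<Longrightarrow>
   linear_cell sm (Suc k) (ext X (\<lambda>x t. lower_ok sm lo x t \<and> upper_ok sm hi x t))"
  using linear_cell.cyl[of sm k X lo hi] unfolding cell_cyl_ext by simp

lemma cell_cyl2: "linear_cell sm k X \<Longrightarrow> aff k f \<Longrightarrow> aff k h \<Longrightarrow> (\<forall>x\<in>X. f x < h x) \<Longrightarrow>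
   linear_cell sm (Suc k) (ext X (\<lambda>x t. f x < t \<and> t < h x))"
proof -
  assume X: "linear_cell sm k X" and f: "aff k f" and h: "aff k h" and lt: "\<forall>x\<in>X. f x < h x"
  obtain ls a where ls: "length ls = k" "\<forall>x. length x = k \<longrightarrow> f x = lf sm ls a x"
    using aff_ex[OF f] by blast
  obtain ls2 a2 where ls2: "length ls2 = k" "\<forall>x. length x = k \<longrightarrow> h x = lf sm ls2 a2 x"
    using aff_ex[OF h] by blast
  have "ext X (\<lambda>x t. f x < t \<and> t < h x) =
        ext X (\<lambda>x t. lower_ok sm (Some (ls, a)) x t \<and> upper_ok sm (Some (ls2, a2)) x t)"
    using ls ls2 cell_len[OF X] by (intro ext_cong) (auto simp: lower_ok_def upper_ok_def)
  moreover have "linear_cell sm (Suc k) (ext X (\<lambda>x t. lower_ok sm (Some (ls, a)) x t \<and> upper_ok sm (Some (ls2, a2)) x t))"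
    using ls ls2 cell_len[OF X] lt by (intro cell_cyl_gen X) (auto simp: bounds_lt_def)
  ultimately show ?thesis by simp
qed

lemma cell_cyl_lo: "linear_cell sm k X \<Longrightarrow> aff k f \<Longrightarrow>
   linear_cell sm (Suc k) (ext X (\<lambda>x t. f x < t))"
proof -
  assume X: "linear_cell sm k X" and f: "aff k f"
  obtain ls a where ls: "length ls = k" "\<forall>x. length x = k \<longrightarrow> f x = lf sm ls a x"
    using aff_ex[OF f] by blast
  have "ext X (\<lambda>x t. f x < t) =
        ext X (\<lambda>x t. lower_ok sm (Some (ls, a)) x t \<and> upper_ok sm None x t)"
    using ls cell_len[OF X] by (intro ext_cong) (auto simp: lower_ok_def upper_ok_def)
  moreover have "linear_cell sm (Suc k) (ext X (\<lambda>x t. lower_ok sm (Some (ls, a)) x t \<and> upper_ok sm None x t))"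
    using ls by (intro cell_cyl_gen X) (auto simp: bounds_lt_def)
  ultimately show ?thesis by simp
qed

lemma cell_cyl_hi: "linear_cell sm k X \<Longrightarrow> aff k h \<Longrightarrow>
   linear_cell sm (Suc k) (ext X (\<lambda>x t. t < h x))"
proof -
  assume X: "linear_cell sm k X" and f: "aff k h"
  obtain ls a where ls: "length ls = k" "\<forall>x. length x = k \<longrightarrow> h x = lf sm ls a x"
    using aff_ex[OF f] by blast
  have "ext X (\<lambda>x t. t < h x) =
        ext X (\<lambda>x t. lower_ok sm None x t \<and> upper_ok sm (Some (ls, a)) x t)"
    using ls cell_len[OF X] by (intro ext_cong) (auto simp: lower_ok_def upper_ok_def)
  moreover have "linear_cell sm (Suc k) (ext X (\<lambda>x t. lower_ok sm None x t \<and> upper_ok sm (Some (ls, a)) x t))"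
    using ls by (intro cell_cyl_gen X) (auto simp: bounds_lt_def)
  ultimately show ?thesis by simp
qed

lemma cell_cyl_none: "linear_cell sm k X \<Longrightarrow> linear_cell sm (Suc k) (ext X (\<lambda>x t. True))"
proof -
  assume X: "linear_cell sm k X"
  have "ext X (\<lambda>x t. True) = ext X (\<lambda>x t. lower_ok sm None x t \<and> upper_ok sm None x t)"
    by (intro ext_cong) (auto simp: lower_ok_def upper_ok_def)
  moreover have "linear_cell sm (Suc k) (ext X (\<lambda>x t. lower_ok sm None x t \<and> upper_ok sm None x t))"
    by (intro cell_cyl_gen X) (auto simp: bounds_lt_def)
  ultimately show ?thesis by simp
qed

end

locale ovs2 = ovs sm for sm :: "'k::{division_ring,linordered_ring_strict} \<Rightarrow> 'm::linordered_ab_group_add \<Rightarrow> 'm" +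
  assumes nontriv: "\<exists>e::'m. 0 < e"
begin

lemma no_top: "\<exists>t. (b::'m) < t"
  using nontriv by (metis less_add_same_cancel1)
lemma no_bot: "\<exists>t. t < (b::'m)"
proof -
  obtain e :: 'm where "0 < e" using nontriv by blast
  then show ?thesis by (intro exI[of _ "b - e"]) simp
qed

definition lov :: "('k list \<times> 'm) option \<Rightarrow> 'm list \<Rightarrow> 'm option" where
  "lov lo x = map_option (\<lambda>(ls, a). lf sm ls a x) lo"

lemma lower_ok_alt: "lower_ok sm lo x t \<longleftrightarrow> (\<forall>l\<in>set_option (lov lo x). l < t)"
  by (cases lo) (auto simp: lower_ok_def lov_def)
lemma upper_ok_alt: "upper_ok sm hi x t \<longleftrightarrow> (\<forall>u\<in>set_option (lov hi x). t < u)"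
  by (cases hi) (auto simp: upper_ok_def lov_def)
lemma bounds_lt_alt: "bounds_lt sm lo hi x \<longleftrightarrow> (\<forall>l\<in>set_option (lov lo x). \<forall>u\<in>set_option (lov hi x). l < u)"
  by (cases lo; cases hi) (auto simp: bounds_lt_def lov_def)

lemma ival_ne: "(\<forall>l\<in>set_option L. \<forall>u\<in>set_option U. l < u) \<Longrightarrow>
   \<exists>t. (\<forall>l\<in>set_option L. l < t) \<and> (\<forall>u\<in>set_option U. t < (u::'m))"
proof (cases L; cases U)
  fix l u assume "L = Some l" "U = Some u" "\<forall>l\<in>set_option L. \<forall>u\<in>set_option U. l < u"
  then show ?thesis using dense_ex[of l u] by auto
qed (use no_top no_bot in auto)

lemma ival_below: "(\<forall>l\<in>set_option L. l < t0) \<Longrightarrow>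
   \<exists>t. t < t0 \<and> (\<forall>l\<in>set_option L. l < (t::'m))"
proof (cases L)
  case None then show ?thesis using no_bot by auto
next
  case (Some l) assume "\<forall>l\<in>set_option L. l < t0"
  then show ?thesis using dense_ex[of l t0] Some by auto
qed

lemma ival_above: "(\<forall>u\<in>set_option U. t0 < u) \<Longrightarrow>
   \<exists>t. t0 < t \<and> (\<forall>u\<in>set_option U. t < (u::'m))"
proof (cases U)
  case None then show ?thesis using no_top by auto
next
  case (Some u) assume "\<forall>u\<in>set_option U. t0 < u"
  then show ?thesis using dense_ex[of t0 u] Some by auto
qed

lemma ival_unb_below: "(\<forall>u\<in>set_option U. b < u) \<Longrightarrow>
   \<exists>t. t < B \<and> (\<forall>u\<in>set_option U. t < (u::'m))"
proof -
  assume h: "\<forall>u\<in>set_option U. b < u"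
  obtain t where "t < min B b" using no_bot by blast
  then show ?thesis using h by (intro exI[of _ t]) auto
qed

lemma ival_unb_above: "(\<forall>l\<in>set_option L. l < b) \<Longrightarrow>
   \<exists>t. B < t \<and> (\<forall>l\<in>set_option L. l < (t::'m))"
proof -
  assume h: "\<forall>l\<in>set_option L. l < b"
  obtain t where "max B b < t" using no_top by blast
  then show ?thesis using h by (intro exI[of _ t]) auto
qed

lemma ival_near_lo: "(\<forall>u\<in>set_option U. a < u) \<Longrightarrow> 0 < \<delta> \<Longrightarrow>
   \<exists>t. a < t \<and> t < a + \<delta> \<and> (\<forall>u\<in>set_option U. t < (u::'m))"
proof -
  assume h: "\<forall>u\<in>set_option U. a < u" and d: "0 < \<delta>"
  have "a < a + \<delta>" using d by simp
  then obtain b where b: "a < b" "b \<le> a + \<delta>" "\<forall>u\<in>set_option U. b \<le> u"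
  proof (cases U)
    case None then show ?thesis using \<open>a < a + \<delta>\<close> that[of "a + \<delta>"] by auto
  next
    case (Some u) then show ?thesis using h \<open>a < a + \<delta>\<close> that[of "min (a+\<delta>) u"] by auto
  qed
  obtain t where "a < t" "t < b" using dense_ex[OF b(1)] by blast
  then show ?thesis using b by (intro exI[of _ t]) auto
qed

lemma ival_near_hi: "(\<forall>l\<in>set_option L. l < a) \<Longrightarrow> 0 < \<delta> \<Longrightarrow>
   \<exists>t. a - \<delta> < t \<and> t < a \<and> (\<forall>l\<in>set_option L. l < (t::'m))"
proof -
  assume h: "\<forall>l\<in>set_option L. l < a" and d: "0 < \<delta>"
  have "a - \<delta> < a" using d by simp
  then obtain b where b: "b < a" "a - \<delta> \<le> b" "\<forall>l\<in>set_option L. l \<le> b"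
  proof (cases L)
    case None then show ?thesis using \<open>a - \<delta> < a\<close> that[of "a - \<delta>"] by auto
  next
    case (Some l) then show ?thesis using h \<open>a - \<delta> < a\<close> that[of "max (a-\<delta>) l"] by auto
  qed
  obtain t where "b < t" "t < a" using dense_ex[OF b(1)] by blast
  then show ?thesis using b by (intro exI[of _ t]) auto
qed

lemma cell_ne: "linear_cell sm k X \<Longrightarrow> X \<noteq> {}"
proof (induction rule: linear_cell.induct)
  case zero then show ?case by simp
next
  case (graph k X ls a) then show ?case by simp
next
  case (cyl k X lo hi)
  then obtain x where x: "x \<in> X" by blast
  then obtain t where "lower_ok sm lo x t \<and> upper_ok sm hi x t"
    using cyl.hyps(4) ival_ne[of "lov lo x" "lov hi x"] by (auto simp: lower_ok_alt upper_ok_alt bounds_lt_alt)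
  then show ?case using x by blast
qed

end


context ovs2 begin

lemma cyl_mem: "x @ [t] \<in> {x @ [t] | x t. x \<in> X \<and> lower_ok sm lo x t \<and> upper_ok sm hi x t}
   \<longleftrightarrow> x \<in> X \<and> (\<forall>l\<in>set_option (lov lo x). l < t) \<and> (\<forall>u\<in>set_option (lov hi x). t < u)"
  by (auto simp: lower_ok_alt upper_ok_alt)

lemma cyl_cases: "z \<in> {x @ [t] | x t. x \<in> X \<and> lower_ok sm lo x t \<and> upper_ok sm hi x t} \<Longrightarrow>
   (\<And>x t. z = x @ [t] \<Longrightarrow> x \<in> X \<Longrightarrow> (\<forall>l\<in>set_option (lov lo x). l < t) \<Longrightarrow> (\<forall>u\<in>set_option (lov hi x). t < u) \<Longrightarrow> P) \<Longrightarrow> P"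
  by (auto simp: lower_ok_alt upper_ok_alt)

lemma graph_aff: "aff (Suc k) f \<Longrightarrow> length ls = k \<Longrightarrow> aff k (\<lambda>x. f (x @ [lf sm ls a x]))"
proof -
  assume f: "aff (Suc k) f" and ls: "length ls = k"
  obtain f0 c where f0: "aff k f0" "\<forall>x t. length x = k \<longrightarrow> f (x @ [t]) = f0 x + sm c t"
    using aff_split[OF f] by blast
  have "aff k (\<lambda>x. f0 x + sm c (lf sm ls a x))"
    by (intro aff_add aff_smul aff_lf f0 ls)
  then show ?thesis by (rule aff_cong) (use f0 in simp)
qed

lemma inf_exists: "linear_cell sm k K \<Longrightarrow> aff k f \<Longrightarrow> K \<noteq> {} \<Longrightarrow> (\<forall>x\<in>K. c0 \<le> f x) \<Longrightarrow>
   \<exists>c. (\<forall>x\<in>K. c \<le> f x) \<and> (\<forall>v. c < v \<longrightarrow> (\<exists>x\<in>K. f x < v))"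
proof (induction arbitrary: f c0 rule: linear_cell.induct)
  case zero
  then show ?case by (intro exI[of _ "f []"]) auto
next
  case (graph k X ls a)
  have h: "aff k (\<lambda>x. f (x @ [lf sm ls a x]))" using graph_aff[OF graph.prems(1) graph.hyps(2)] .
  obtain c where "\<forall>x\<in>X. c \<le> f (x @ [lf sm ls a x])" "\<forall>v. c < v \<longrightarrow> (\<exists>x\<in>X. f (x @ [lf sm ls a x]) < v)"
    using graph.IH[OF h, of c0] graph.prems by auto
  then show ?case by (intro exI[of _ c]) auto
next
  case (cyl k X lo hi)
  let ?K = "{x @ [t] | x t. x \<in> X \<and> lower_ok sm lo x t \<and> upper_ok sm hi x t}"
  obtain f0 a where f0: "aff k f0" "\<forall>x t. length x = k \<longrightarrow> f (x @ [t]) = f0 x + sm a t"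
    using aff_split[OF cyl.prems(1)] by blast
  have len: "\<And>x. x \<in> X \<Longrightarrow> length x = k" using cell_len[OF cyl.hyps(1)] by blast
  have fx: "\<And>x t. x \<in> X \<Longrightarrow> f (x @ [t]) = f0 x + sm a t" using f0 len by blast
  have fib: "\<exists>t. (\<forall>l\<in>set_option (lov lo x). l < t) \<and> (\<forall>u\<in>set_option (lov hi x). t < u)" if "x \<in> X" for x
  proof -
    have "bounds_lt sm lo hi x" using cyl.hyps(4) that by blast
    then show ?thesis unfolding bounds_lt_alt by (rule ival_ne)
  qed
  have blt: "l < u" if "x \<in> X" "l \<in> set_option (lov lo x)" "u \<in> set_option (lov hi x)" for x l u
  proof -
    have "bounds_lt sm lo hi x" using cyl.hyps(4) that by blast
    then show ?thesis unfolding bounds_lt_alt using that by blast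
  qed
  have lb: "c0 \<le> f0 x + sm a t" if "x \<in> X" "\<forall>l\<in>set_option (lov lo x). l < t" "\<forall>u\<in>set_option (lov hi x). t < u" for x t
  proof -
    have "x @ [t] \<in> ?K" by (subst cyl_mem) (use that in blast)
    then have "c0 \<le> f (x @ [t])" using cyl.prems(3) by blast
    then show ?thesis using fx[OF that(1)] by simp
  qed
  have Xne: "X \<noteq> {}" using cyl.prems(2) by auto
  consider "a = 0" | "0 < a" | "a < 0" using less_linear by blast
  then show ?case
  proof cases
    case 1
    have "\<forall>x\<in>X. c0 \<le> f0 x"
    proof
      fix x assume x: "x \<in> X"
      then obtain t where "(\<forall>l\<in>set_option (lov lo x). l < t)" "(\<forall>u\<in>set_option (lov hi x). t < u)"
        using fib by blast
      then show "c0 \<le> f0 x" using lb[OF x] 1 by simp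
    qed
    then obtain c where c: "\<forall>x\<in>X. c \<le> f0 x" "\<forall>v. c < v \<longrightarrow> (\<exists>x\<in>X. f0 x < v)"
      using cyl.IH[OF f0(1) Xne] by blast
    show ?thesis
    proof (intro exI[of _ c] conjI allI impI ballI)
      fix z assume "z \<in> ?K" then show "c \<le> f z" using c fx 1 by (auto simp: lower_ok_alt upper_ok_alt)
    next
      fix v assume "c < v"
      then obtain x where "x \<in> X" "f0 x < v" using c by blast
      moreover obtain t where "(\<forall>l\<in>set_option (lov lo x). l < t) \<and> (\<forall>u\<in>set_option (lov hi x). t < u)"
        using fib[OF \<open>x \<in> X\<close>] by blast
      ultimately show "\<exists>z\<in>?K. f z < v" using fx 1 by (intro bexI[of _ "x @ [t]"]) (auto simp: lower_ok_alt upper_ok_alt)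
    qed
  next
    case 2
    show ?thesis
    proof (cases lo)
      case None
      obtain x where x: "x \<in> X" using Xne by blast
      obtain t1 where t1: "\<forall>u\<in>set_option (lov hi x). t1 < u" using fib[OF x] by blast
      obtain t where t: "t < sm (inverse a) (c0 - f0 x)" "\<forall>u\<in>set_option (lov hi x). t < u"
        using ival_unb_below[OF t1] by blast
      have "sm a t < sm a (sm (inverse a) (c0 - f0 x))" using sm_mono[OF 2 t(1)] .
      then have "f0 x + sm a t < c0" using sm_inv[of a] 2 by (simp add: algebra_simps)
      moreover have "c0 \<le> f0 x + sm a t" using lb[OF x _ t(2)] None by (simp add: lov_def)
      ultimately show ?thesis by simp
    next
      case (Some p)
      obtain ls b where p: "p = (ls, b)" by (cases p) blast
      have lsl: "length ls = k" using cyl.hyps(2) Some p by simp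
      define h where "h x = f0 x + sm a (lf sm ls b x)" for x
      have lov: "lov lo x = Some (lf sm ls b x)" for x by (simp add: lov_def Some p)
      have haff: "aff k h" unfolding h_def by (intro aff_add aff_smul aff_lf f0 lsl)
      have hlb: "\<forall>x\<in>X. c0 \<le> h x"
      proof (rule ballI, rule ccontr)
        fix x assume x: "x \<in> X" and "\<not> c0 \<le> h x"
        then have d: "0 < sm (inverse a) (c0 - h x)" using sm_pos inv_pos 2 by simp
        have "\<forall>u\<in>set_option (lov hi x). lf sm ls b x < u" using blt[OF x] lov by simp
        then obtain t where t: "lf sm ls b x < t" "t < lf sm ls b x + sm (inverse a) (c0 - h x)"
          "\<forall>u\<in>set_option (lov hi x). t < u" using ival_near_lo[OF _ d] by blast
        have "sm a t < sm a (lf sm ls b x + sm (inverse a) (c0 - h x))" using sm_mono[OF 2 t(2)] .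
        then have "f0 x + sm a t < c0" using sm_inv[of a] 2 by (simp add: algebra_simps sm_add1 h_def)
        moreover have "c0 \<le> f0 x + sm a t" using lb[OF x _ t(3)] lov t(1) by simp
        ultimately show False by simp
      qed
      obtain c where c: "\<forall>x\<in>X. c \<le> h x" "\<forall>v. c < v \<longrightarrow> (\<exists>x\<in>X. h x < v)"
        using cyl.IH[OF haff Xne hlb] by blast
      show ?thesis
      proof (intro exI[of _ c] conjI allI impI ballI)
        fix z assume "z \<in> ?K"
        then obtain x t where z: "z = x @ [t]" "x \<in> X" "lf sm ls b x < t"
          by (auto simp: lower_ok_alt lov)
        have "h x < f0 x + sm a t" unfolding h_def using sm_mono[OF 2 z(3)] by simp
        moreover have "f z = f0 x + sm a t" using fx z by simp
        moreover have "c \<le> h x" using c(1) z(2) by blast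
        ultimately show "c \<le> f z" by simp
      next
        fix v assume "c < v"
        then obtain x where x: "x \<in> X" "h x < v" using c by blast
        then have d: "0 < sm (inverse a) (v - h x)" using sm_pos inv_pos 2 by simp
        have "\<forall>u\<in>set_option (lov hi x). lf sm ls b x < u" using blt[OF x(1)] lov by simp
        then obtain t where t: "lf sm ls b x < t" "t < lf sm ls b x + sm (inverse a) (v - h x)"
          "\<forall>u\<in>set_option (lov hi x). t < u" using ival_near_lo[OF _ d] by blast
        have "sm a t < sm a (lf sm ls b x + sm (inverse a) (v - h x))" using sm_mono[OF 2 t(2)] .
        then have "f0 x + sm a t < v" using sm_inv[of a] 2 by (simp add: algebra_simps sm_add1 h_def)
        then show "\<exists>z\<in>?K. f z < v" using fx[OF x(1)] x t
          by (intro bexI[of _ "x @ [t]"]) (auto simp: lower_ok_alt upper_ok_alt lov)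
      qed
    qed
  next
    case 3
    have na: "0 < - a" using 3 by simp
    show ?thesis
    proof (cases hi)
      case None
      obtain x where x: "x \<in> X" using Xne by blast
      obtain t1 where t1: "\<forall>l\<in>set_option (lov lo x). l < t1" using fib[OF x] by blast
      obtain t where t: "sm (inverse (-a)) (f0 x - c0) < t" "\<forall>l\<in>set_option (lov lo x). l < t"
        using ival_unb_above[OF t1] by blast
      have "sm (-a) (sm (inverse (-a)) (f0 x - c0)) < sm (-a) t" using sm_mono[OF na t(1)] .
      moreover have "sm (-a) (sm (inverse (-a)) (f0 x - c0)) = f0 x - c0" using sm_inv[of "-a"] na by simp
      moreover have "sm (-a) t = - sm a t" by (rule sm_neg1)
      ultimately have "f0 x - c0 < - sm a t" by simp
      then have "f0 x + sm a t < c0" by (simp add: algebra_simps)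
      moreover have "c0 \<le> f0 x + sm a t" using lb[OF x t(2)] None by (simp add: lov_def)
      ultimately show ?thesis by simp
    next
      case (Some p)
      obtain ls b where p: "p = (ls, b)" by (cases p) blast
      have lsl: "length ls = k" using cyl.hyps(3) Some p by simp
      define h where "h x = f0 x + sm a (lf sm ls b x)" for x
      have lov: "lov hi x = Some (lf sm ls b x)" for x by (simp add: lov_def Some p)
      have haff: "aff k h" unfolding h_def by (intro aff_add aff_smul aff_lf f0 lsl)
      have hlb: "\<forall>x\<in>X. c0 \<le> h x"
      proof (rule ballI, rule ccontr)
        fix x assume x: "x \<in> X" and "\<not> c0 \<le> h x"
        then have d: "0 < sm (inverse (-a)) (c0 - h x)" by (intro sm_pos inv_pos na) simp
        have "\<forall>l\<in>set_option (lov lo x). l < lf sm ls b x" using blt[OF x] lov by simp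
        then obtain t where t: "lf sm ls b x - sm (inverse (-a)) (c0 - h x) < t" "t < lf sm ls b x"
          "\<forall>l\<in>set_option (lov lo x). l < t" using ival_near_hi[OF _ d] by blast
        have "sm (-a) (lf sm ls b x - sm (inverse (-a)) (c0 - h x)) < sm (-a) t" using sm_mono[OF na t(1)] .
        moreover have "sm (-a) (lf sm ls b x - sm (inverse (-a)) (c0 - h x)) = sm (-a) (lf sm ls b x) - sm (-a) (sm (inverse (-a)) (c0 - h x))" by (rule sm_diff1)
        moreover have "sm (-a) (sm (inverse (-a)) (c0 - h x)) = c0 - h x" using sm_inv[of "-a"] na by simp
        moreover have "sm (-a) t = - sm a t" by (rule sm_neg1)
        moreover have "sm (-a) (lf sm ls b x) = - sm a (lf sm ls b x)" by (rule sm_neg1)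
        ultimately have "- sm a (lf sm ls b x) - (c0 - h x) < - sm a t" by simp
        then have "f0 x + sm a t < c0" by (simp add: algebra_simps h_def)
        moreover have "c0 \<le> f0 x + sm a t" using lb[OF x t(3)] lov t(2) by simp
        ultimately show False by simp
      qed
      obtain c where c: "\<forall>x\<in>X. c \<le> h x" "\<forall>v. c < v \<longrightarrow> (\<exists>x\<in>X. h x < v)"
        using cyl.IH[OF haff Xne hlb] by blast
      show ?thesis
      proof (intro exI[of _ c] conjI allI impI ballI)
        fix z assume "z \<in> ?K"
        then obtain x t where z: "z = x @ [t]" "x \<in> X" "t < lf sm ls b x"
          by (auto simp: upper_ok_alt lov)
        have "h x < f0 x + sm a t" unfolding h_def using sm_neg_mono[OF 3 z(3)] by simp
        moreover have "f z = f0 x + sm a t" using fx z by simp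
        moreover have "c \<le> h x" using c(1) z(2) by blast
        ultimately show "c \<le> f z" by simp
      next
        fix v assume "c < v"
        then obtain x where x: "x \<in> X" "h x < v" using c by blast
        then have d: "0 < sm (inverse (-a)) (v - h x)" by (intro sm_pos inv_pos na) simp
        have "\<forall>l\<in>set_option (lov lo x). l < lf sm ls b x" using blt[OF x(1)] lov by simp
        then obtain t where t: "lf sm ls b x - sm (inverse (-a)) (v - h x) < t" "t < lf sm ls b x"
          "\<forall>l\<in>set_option (lov lo x). l < t" using ival_near_hi[OF _ d] by blast
        have "sm (-a) (lf sm ls b x - sm (inverse (-a)) (v - h x)) < sm (-a) t" using sm_mono[OF na t(1)] .
        moreover have "sm (-a) (lf sm ls b x - sm (inverse (-a)) (v - h x)) = sm (-a) (lf sm ls b x) - sm (-a) (sm (inverse (-a)) (v - h x))" by (rule sm_diff1)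
        moreover have "sm (-a) (sm (inverse (-a)) (v - h x)) = v - h x" using sm_inv[of "-a"] na by simp
        moreover have "sm (-a) t = - sm a t" by (rule sm_neg1)
        moreover have "sm (-a) (lf sm ls b x) = - sm a (lf sm ls b x)" by (rule sm_neg1)
        ultimately have "- sm a (lf sm ls b x) - (v - h x) < - sm a t" by simp
        then have "f0 x + sm a t < v" by (simp add: algebra_simps h_def)
        then show "\<exists>z\<in>?K. f z < v" using fx[OF x(1)] x t
          by (intro bexI[of _ "x @ [t]"]) (auto simp: lower_ok_alt upper_ok_alt lov)
      qed
    qed
  qed
qed

end


context ovs2 begin

lemma sm_big: "a \<noteq> 0 \<Longrightarrow> 0 \<le> B \<Longrightarrow> \<exists>N\<ge>0. \<forall>d. N < d \<longrightarrow> B < sm a d \<or> sm a d < - B"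
proof -
  assume a: "a \<noteq> 0" and B: "0 \<le> B"
  consider "0 < a" | "a < 0" using a less_linear by blast
  then show ?thesis
  proof cases
    case 1
    have N: "0 \<le> sm (inverse a) B" using sm_mono_le[of "inverse a" 0 B] inv_pos[OF 1] B by simp
    show ?thesis
    proof (intro exI[of _ "sm (inverse a) B"] conjI allI impI N)
      fix d assume "sm (inverse a) B < d"
      then have "sm a (sm (inverse a) B) < sm a d" by (rule sm_mono[OF 1])
      then show "B < sm a d \<or> sm a d < - B" using sm_inv[OF a] by simp
    qed
  next
    case 2
    have na: "0 < -a" using 2 by simp
    have N: "0 \<le> sm (inverse (-a)) B" using sm_mono_le[of "inverse (-a)" 0 B] inv_pos[OF na] B by simp
    show ?thesis
    proof (intro exI[of _ "sm (inverse (-a)) B"] conjI allI impI N)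
      fix d assume "sm (inverse (-a)) B < d"
      then have "sm (-a) (sm (inverse (-a)) B) < sm (-a) d" by (rule sm_mono[OF na])
      moreover have "sm (-a) (sm (inverse (-a)) B) = B" using sm_inv[of "-a"] a by simp
      ultimately have "B < sm (-a) d" by metis
      moreover have "sm (-a) d = - sm a d" by (rule sm_neg1)
      ultimately show "B < sm a d \<or> sm a d < - B" by (simp add: less_minus_iff)
    qed
  qed
qed

lemma cyl_butlast: "(\<forall>x\<in>X. bounds_lt sm lo hi x) \<Longrightarrow>
   butlast ` {x @ [t] | x t. x \<in> X \<and> lower_ok sm lo x t \<and> upper_ok sm hi x t} = X"
proof -
  assume h: "\<forall>x\<in>X. bounds_lt sm lo hi x"
  have "\<exists>t. lower_ok sm lo x t \<and> upper_ok sm hi x t" if "x \<in> X" for x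
  proof -
    have "bounds_lt sm lo hi x" using h that by blast
    then show ?thesis unfolding bounds_lt_alt lower_ok_alt upper_ok_alt by (rule ival_ne)
  qed
  then show ?thesis unfolding cell_cyl_ext by (intro butlast_ext) blast
qed

lemma grp_contra: "(B1::'a::ordered_ab_group_add) \<le> x + p \<Longrightarrow> x + q \<le> B2 \<Longrightarrow> B2 + p < B1 + q \<Longrightarrow> False"
proof -
  assume h1: "B1 \<le> x + p" and h2: "x + q \<le> B2" and h3: "B2 + p < B1 + q"
  have "B1 + (x + q) \<le> (x + p) + B2" using add_mono[OF h1 h2] .
  then have "x + (B1 + q) \<le> x + (B2 + p)" by (simp only: add.assoc add.commute add.left_commute)
  then have "B1 + q \<le> B2 + p" by simp
  with h3 show False by simp
qed

lemma pu_butlast: "purely_unbounded (Suc k) C \<Longrightarrow> purely_unbounded k (butlast ` C)"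
  by auto

lemma pu_nongraph: "purely_unbounded (Suc k) C \<Longrightarrow> \<not> is_graph C \<Longrightarrow>
   \<forall>N\<ge>0. \<exists>x\<in>C. \<not> fiber C (butlast x) \<subseteq> {last x - N..last x + N}"
  by simp

lemma fiber_mem: "t \<in> fiber C y \<longleftrightarrow> y @ [t] \<in> C"
  by (simp add: fiber_def)

lemma graph_butlast: "butlast ` (\<lambda>x. x @ [f x]) ` X = X"
  by (simp add: image_image)

lemma rel_open: "linear_cell sm k K \<Longrightarrow> aff k f \<Longrightarrow> (\<forall>x\<in>K. 0 \<le> f x) \<Longrightarrow> x0 \<in> K \<Longrightarrow> f x0 = 0 \<Longrightarrow>
   \<forall>x\<in>K. f x = 0"
proof (induction arbitrary: f x0 rule: linear_cell.induct)
  case zero then show ?case by simp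
next
  case (graph k X ls a)
  have h: "aff k (\<lambda>x. f (x @ [lf sm ls a x]))" using graph_aff[OF graph.prems(1) graph.hyps(2)] .
  obtain y0 where y0: "y0 \<in> X" "x0 = y0 @ [lf sm ls a y0]" using graph.prems(3) by blast
  have "\<forall>x\<in>X. f (x @ [lf sm ls a x]) = 0"
    using graph.IH[OF h, of y0] graph.prems y0 by auto
  then show ?case by blast
next
  case (cyl k X lo hi)
  let ?K = "{x @ [t] | x t. x \<in> X \<and> lower_ok sm lo x t \<and> upper_ok sm hi x t}"
  obtain f0 a where f0: "aff k f0" "\<forall>x t. length x = k \<longrightarrow> f (x @ [t]) = f0 x + sm a t"
    using aff_split[OF cyl.prems(1)] by blast
  have len: "\<And>x. x \<in> X \<Longrightarrow> length x = k" using cell_len[OF cyl.hyps(1)] by blast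
  have fx: "\<And>x t. x \<in> X \<Longrightarrow> f (x @ [t]) = f0 x + sm a t" using f0 len by blast
  have fib: "\<exists>t. (\<forall>l\<in>set_option (lov lo x). l < t) \<and> (\<forall>u\<in>set_option (lov hi x). t < u)" if "x \<in> X" for x
  proof -
    have "bounds_lt sm lo hi x" using cyl.hyps(4) that by blast
    then show ?thesis unfolding bounds_lt_alt by (rule ival_ne)
  qed
  have lb: "0 \<le> f0 x + sm a t" if "x \<in> X" "\<forall>l\<in>set_option (lov lo x). l < t" "\<forall>u\<in>set_option (lov hi x). t < u" for x t
  proof -
    have "x @ [t] \<in> ?K" by (subst cyl_mem) (use that in blast)
    then have "0 \<le> f (x @ [t])" using cyl.prems(2) by blast
    then show ?thesis using fx[OF that(1)] by simp
  qed
  obtain y0 t0 where y0: "x0 = y0 @ [t0]" "y0 \<in> X" "\<forall>l\<in>set_option (lov lo y0). l < t0" "\<forall>u\<in>set_option (lov hi y0). t0 < u"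
    using cyl.prems(3) by (rule cyl_cases)
  have z0: "f0 y0 + sm a t0 = 0" using cyl.prems(4) fx[OF y0(2)] y0(1) by simp
  have a0: "a = 0"
  proof (rule ccontr)
    assume "a \<noteq> 0"
    then consider "0 < a" | "a < 0" using less_linear by blast
    then show False
    proof cases
      case 1
      obtain t where t: "t < t0" "\<forall>l\<in>set_option (lov lo y0). l < t" using ival_below[OF y0(3)] by blast
      have "\<forall>u\<in>set_option (lov hi y0). t < u" using t(1) y0(4) by auto
      then have "0 \<le> f0 y0 + sm a t" using lb[OF y0(2) t(2)] by blast
      moreover have "sm a t < sm a t0" using sm_mono[OF 1 t(1)] .
      ultimately show False using z0 add_strict_left_mono[of "sm a t" "sm a t0" "f0 y0"] by simp
    next
      case 2
      obtain t where t: "t0 < t" "\<forall>u\<in>set_option (lov hi y0). t < u" using ival_above[OF y0(4)] by blast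
      have "\<forall>l\<in>set_option (lov lo y0). l < t" using t(1) y0(3) by auto
      then have "0 \<le> f0 y0 + sm a t" using lb[OF y0(2) _ t(2)] by blast
      moreover have "sm a t < sm a t0" using sm_neg_mono[OF 2 t(1)] .
      ultimately show False using z0 add_strict_left_mono[of "sm a t" "sm a t0" "f0 y0"] by simp
    qed
  qed
  have "\<forall>x\<in>X. 0 \<le> f0 x"
  proof
    fix x assume x: "x \<in> X"
    then obtain t where "(\<forall>l\<in>set_option (lov lo x). l < t)" "(\<forall>u\<in>set_option (lov hi x). t < u)"
      using fib by blast
    then show "0 \<le> f0 x" using lb[OF x] a0 by simp
  qed
  then have "\<forall>x\<in>X. f0 x = 0" using cyl.IH[OF f0(1), of y0] y0(2) z0 a0 by simp
  then show ?case using fx a0 by (auto simp: lower_ok_alt upper_ok_alt)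
qed

lemma pu_img: "linear_cell sm k K \<Longrightarrow> purely_unbounded k K \<Longrightarrow> aff k f \<Longrightarrow>
   (\<forall>x\<in>K. B1 \<le> f x \<and> f x \<le> B2) \<Longrightarrow> x0 \<in> K \<Longrightarrow> \<forall>x\<in>K. f x = f x0"
proof (induction arbitrary: f x0 rule: linear_cell.induct)
  case zero then show ?case by simp
next
  case (graph k X ls a)
  have h: "aff k (\<lambda>x. f (x @ [lf sm ls a x]))" using graph_aff[OF graph.prems(2) graph.hyps(2)] .
  have pu: "purely_unbounded k X"
  proof -
    have "purely_unbounded k (butlast ` (\<lambda>x. x @ [lf sm ls a x]) ` X)" by (rule pu_butlast[OF graph.prems(1)])
    then show ?thesis unfolding graph_butlast .
  qed
  obtain y0 where y0: "y0 \<in> X" "x0 = y0 @ [lf sm ls a y0]" using graph.prems(4) by blast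
  have bX: "\<forall>x\<in>X. B1 \<le> f (x @ [lf sm ls a x]) \<and> f (x @ [lf sm ls a x]) \<le> B2"
    using graph.prems(3) by blast
  have "\<forall>x\<in>X. f (x @ [lf sm ls a x]) = f (y0 @ [lf sm ls a y0])"
    using graph.IH[OF pu h bX y0(1)] .
  then show ?case using y0 by blast
next
  case (cyl k X lo hi)
  let ?K = "{x @ [t] | x t. x \<in> X \<and> lower_ok sm lo x t \<and> upper_ok sm hi x t}"
  obtain f0 a where f0: "aff k f0" "\<forall>x t. length x = k \<longrightarrow> f (x @ [t]) = f0 x + sm a t"
    using aff_split[OF cyl.prems(2)] by blast
  have len: "\<And>x. x \<in> X \<Longrightarrow> length x = k" using cell_len[OF cyl.hyps(1)] by blast
  have fx: "\<And>x t. x \<in> X \<Longrightarrow> f (x @ [t]) = f0 x + sm a t" using f0 len by blast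
  have fib: "\<exists>t. (\<forall>l\<in>set_option (lov lo x). l < t) \<and> (\<forall>u\<in>set_option (lov hi x). t < u)" if "x \<in> X" for x
  proof -
    have "bounds_lt sm lo hi x" using cyl.hyps(4) that by blast
    then show ?thesis unfolding bounds_lt_alt by (rule ival_ne)
  qed
  have bd: "B1 \<le> f0 x + sm a t \<and> f0 x + sm a t \<le> B2" if "x \<in> X" "\<forall>l\<in>set_option (lov lo x). l < t" "\<forall>u\<in>set_option (lov hi x). t < u" for x t
  proof -
    have "x @ [t] \<in> ?K" by (subst cyl_mem) (use that in blast)
    then have "B1 \<le> f (x @ [t]) \<and> f (x @ [t]) \<le> B2" using cyl.prems(3) by blast
    then show ?thesis using fx[OF that(1)] by simp
  qed
  have bl: "butlast ` ?K = X" using cyl_butlast[OF cyl.hyps(4)] .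
  have pu: "purely_unbounded k X" using pu_butlast[OF cyl.prems(1)] unfolding bl .
  obtain y0 t0 where y0: "x0 = y0 @ [t0]" "y0 \<in> X" "\<forall>l\<in>set_option (lov lo y0). l < t0" "\<forall>u\<in>set_option (lov hi y0). t0 < u"
    using cyl.prems(4) by (rule cyl_cases)
  have a0: "a = 0"
  proof (rule ccontr)
    assume an: "a \<noteq> 0"
    obtain t where t: "t < t0" "\<forall>l\<in>set_option (lov lo y0). l < t" using ival_below[OF y0(3)] by blast
    have "\<forall>u\<in>set_option (lov hi y0). t < u" using t(1) y0(4) by auto
    then have m: "y0 @ [t] \<in> ?K" by (subst cyl_mem) (use t y0 in blast)
    have m0: "y0 @ [t0] \<in> ?K" by (subst cyl_mem) (use y0 in blast)
    have ng: "\<not> is_graph ?K"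
    proof
      assume g: "is_graph ?K"
      have "butlast (y0 @ [t]) = butlast (y0 @ [t0]) \<longrightarrow> y0 @ [t] = y0 @ [t0]"
        using bspec[OF bspec[OF g[unfolded is_graph_def] m] m0] .
      then show False using t(1) by simp
    qed
    have unb: "\<forall>N\<ge>0. \<exists>x\<in>?K. \<not> fiber ?K (butlast x) \<subseteq> {last x - N..last x + N}"
      using pu_nongraph[OF cyl.prems(1) ng] .
    have "B1 \<le> B2" using bd[OF y0(2-4)] by auto
    then obtain N where N: "0 \<le> N" "\<forall>d. N < d \<longrightarrow> B2 - B1 < sm a d \<or> sm a d < - (B2 - B1)"
      using sm_big[OF an, of "B2 - B1"] by auto
    obtain z where z: "z \<in> ?K" "\<not> fiber ?K (butlast z) \<subseteq> {last z - N..last z + N}" using unb N(1) by blast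
    obtain y t1 where yt: "z = y @ [t1]" "y \<in> X" "\<forall>l\<in>set_option (lov lo y). l < t1" "\<forall>u\<in>set_option (lov hi y). t1 < u"
      using z(1) by (rule cyl_cases)
    obtain t2 where t2a: "t2 \<in> fiber ?K (butlast z)" "t2 \<notin> {last z - N..last z + N}" using z(2) by blast
    have t2: "y @ [t2] \<in> ?K" "t2 \<notin> {t1 - N..t1 + N}" using t2a yt(1) unfolding fiber_mem by simp_all
    have t2': "y \<in> X \<and> (\<forall>l\<in>set_option (lov lo y). l < t2) \<and> (\<forall>u\<in>set_option (lov hi y). t2 < u)"
      using t2(1) by (simp only: cyl_mem) blast
    have b1: "B1 \<le> f0 y + sm a t1 \<and> f0 y + sm a t1 \<le> B2" using bd[OF yt(2-4)] .
    have b2: "B1 \<le> f0 y + sm a t2 \<and> f0 y + sm a t2 \<le> B2" using bd[OF yt(2)] t2' by blast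
    have "t2 < t1 - N \<or> t1 + N < t2" using t2(2) by auto
    then have "N < t2 - t1 \<or> N < t1 - t2" by (auto simp: algebra_simps)
    then show False
    proof
      assume "N < t2 - t1"
      then have "B2 - B1 < sm a (t2 - t1) \<or> sm a (t2 - t1) < - (B2 - B1)" using N(2) by blast
      then show False using b1 b2 grp_contra[of B1 "f0 y" "sm a t1" "sm a t2" B2] grp_contra[of B1 "f0 y" "sm a t2" "sm a t1" B2]
        by (auto simp: sm_diff1 algebra_simps)
    next
      assume "N < t1 - t2"
      then have "B2 - B1 < sm a (t1 - t2) \<or> sm a (t1 - t2) < - (B2 - B1)" using N(2) by blast
      then show False using b1 b2 grp_contra[of B1 "f0 y" "sm a t1" "sm a t2" B2] grp_contra[of B1 "f0 y" "sm a t2" "sm a t1" B2]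
        by (auto simp: sm_diff1 algebra_simps)
    qed
  qed
  have "\<forall>x\<in>X. B1 \<le> f0 x \<and> f0 x \<le> B2"
  proof
    fix x assume x: "x \<in> X"
    then obtain t where "(\<forall>l\<in>set_option (lov lo x). l < t)" "(\<forall>u\<in>set_option (lov hi x). t < u)"
      using fib by blast
    then show "B1 \<le> f0 x \<and> f0 x \<le> B2" using bd[OF x] a0 by simp
  qed
  then have "\<forall>x\<in>X. f0 x = f0 y0" using cyl.IH[OF pu f0(1), of y0] y0(2) by blast
  moreover have "f x0 = f0 y0" using fx[OF y0(2)] y0(1) a0 by simp
  ultimately show ?case using fx a0 by (auto simp: lower_ok_alt upper_ok_alt)
qed

end


lemma map2_snoc: "length a = length b \<Longrightarrow> map2 f (a @ [x]) (b @ [y]) = map2 f a b @ [f x y]"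
  by simp

lemma vadd_vsub: "length g = length x \<Longrightarrow> map2 (+) g (map2 (-) x g) = (x::'a::ab_group_add list)"
proof (induction g arbitrary: x)
  case Nil then show ?case by simp
next
  case (Cons a g) then show ?case by (cases x) auto
qed

lemma snoc_ex: "length z = Suc k \<Longrightarrow> \<exists>x t. z = x @ [t] \<and> length x = k"
  by (metis append_butlast_last_id length_butlast diff_Suc_1 list.size(3) nat.distinct(1))

lemma ext_elim: "z \<in> ext X P \<Longrightarrow> (\<And>x t. z = x @ [t] \<Longrightarrow> x \<in> X \<Longrightarrow> P x t \<Longrightarrow> Q) \<Longrightarrow> Q"
  unfolding ext_def by blast

lemma ex1_uniq: "\<exists>!x. P x \<Longrightarrow> P a \<Longrightarrow> P b \<Longrightarrow> a = b"
  by blast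

context ovs2 begin

definition sdata :: "nat \<Rightarrow> 'm list set \<Rightarrow> 'm list set \<Rightarrow> ('m list \<Rightarrow> 'm list) \<Rightarrow> 'm list set \<Rightarrow> bool" where
  "sdata k J D G A \<longleftrightarrow> A = msum J D \<and>
     (\<forall>c\<in>A. \<exists>!p. fst p \<in> J \<and> snd p \<in> D \<and> c = map2 (+) (fst p) (snd p)) \<and>
     affv k k G \<and> (\<forall>x\<in>A. G x \<in> J \<and> map2 (-) x (G x) \<in> D) \<and>
     (\<forall>x\<in>J. length x = k) \<and> (\<forall>x\<in>D. length x = k)"

definition sprod :: "nat \<Rightarrow> 'm list set \<Rightarrow> bool" where
  "sprod k A \<longleftrightarrow> linear_cell sm k A \<and> (\<exists>J D G. linear_cell sm k J \<and> purely_unbounded k J \<and>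
      linear_cell sm k D \<and> bounded_set k D \<and> sdata k J D G A)"

lemma sprod_product: "sprod k A \<Longrightarrow> product_cell sm k A"
  unfolding sprod_def product_cell_def sdata_def by blast

lemma sdata_decomp: "sdata k J D G A \<Longrightarrow> x \<in> A \<Longrightarrow> g \<in> J \<Longrightarrow> d \<in> D \<Longrightarrow> x = map2 (+) g d \<Longrightarrow>
   g = G x \<and> d = map2 (-) x (G x)"
proof -
  assume sd: "sdata k J D G A" and x: "x \<in> A" and g: "g \<in> J" and d: "d \<in> D" and e: "x = map2 (+) g d"
  have u: "\<exists>!p. fst p \<in> J \<and> snd p \<in> D \<and> x = map2 (+) (fst p) (snd p)" using sd x unfolding sdata_def by blast
  have G: "G x \<in> J" "map2 (-) x (G x) \<in> D" using sd x unfolding sdata_def by blast+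
  have lx: "length x = k"
  proof -
    have "length g = k" "length d = k" using sd g d unfolding sdata_def by blast+
    then show ?thesis using e by simp
  qed
  have "length (G x) = k" using sd G(1) unfolding sdata_def by blast
  then have e2: "x = map2 (+) (G x) (map2 (-) x (G x))" using vadd_vsub lx by metis
  have "(g, d) = (G x, map2 (-) x (G x))"
    by (rule ex1_uniq[OF u]) (use g d G e e2 in simp_all)
  then show ?thesis by simp
qed

lemma sdata_len: "sdata k J D G A \<Longrightarrow> x \<in> A \<Longrightarrow> length x = k"
  unfolding sdata_def msum_def by auto

lemma sdata_x: "sdata k J D G A \<Longrightarrow> x \<in> A \<Longrightarrow> x = map2 (+) (G x) (map2 (-) x (G x))"
proof -
  assume sd: "sdata k J D G A" and x: "x \<in> A"
  have "G x \<in> J" using sd x unfolding sdata_def by blast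
  then have "length (G x) = k" using sd unfolding sdata_def by blast
  moreover have "length x = k" using sdata_len[OF sd x] .
  ultimately show ?thesis using vadd_vsub by metis
qed

lemma ext_prod:
  assumes sd: "sdata k J D G A"
    and Saff: "aff (Suc k) (\<lambda>y. S (butlast y) (last y))"
    and Sdet: "\<And>x t s s'. x \<in> A \<Longrightarrow> PJ (G x) s \<Longrightarrow> PD (map2 (-) x (G x)) s' \<Longrightarrow> t = s + s' \<Longrightarrow> S x t = s"
  shows "sdata (Suc k) (ext J PJ) (ext D PD) (\<lambda>y. G (butlast y) @ [S (butlast y) (last y)])
     (ext A (\<lambda>x t. \<exists>s s'. PJ (G x) s \<and> PD (map2 (-) x (G x)) s' \<and> t = s + s'))"
proof -
  let ?J = "ext J PJ" and ?D = "ext D PD" and ?G = "\<lambda>y. G (butlast y) @ [S (butlast y) (last y)]"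
  let ?A = "ext A (\<lambda>x t. \<exists>s s'. PJ (G x) s \<and> PD (map2 (-) x (G x)) s' \<and> t = s + s')"
  have Am: "A = msum J D" using sd unfolding sdata_def by blast
  have lJ: "\<forall>x\<in>J. length x = k" and lD: "\<forall>x\<in>D. length x = k" using sd unfolding sdata_def by blast+
  have GJ: "\<And>x. x \<in> A \<Longrightarrow> G x \<in> J \<and> map2 (-) x (G x) \<in> D" using sd unfolding sdata_def by blast
  have Gv: "affv k k G" using sd unfolding sdata_def by blast
  have eq: "msum ?J ?D = ?A"
  proof
    show "msum ?J ?D \<subseteq> ?A"
    proof
      fix c assume "c \<in> msum ?J ?D"
      then obtain g' d' where c: "c = map2 (+) g' d'" "g' \<in> ?J" "d' \<in> ?D" unfolding msum_def by blast
      obtain g s where g: "g' = g @ [s]" "g \<in> J" "PJ g s" using c(2) by (rule ext_elim)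
      obtain d s' where d: "d' = d @ [s']" "d \<in> D" "PD d s'" using c(3) by (rule ext_elim)
      have lg: "length g = length d" using lJ lD g d by simp
      have cx: "c = map2 (+) g d @ [s + s']" using c(1) g(1) d(1) lg by simp
      have xA: "map2 (+) g d \<in> A" unfolding Am msum_def using g d by blast
      have dec: "g = G (map2 (+) g d) \<and> d = map2 (-) (map2 (+) g d) (G (map2 (+) g d))"
        using sdata_decomp[OF sd xA g(2) d(2) refl] .
      have gd1: "G (map2 (+) g d) = g" using dec by metis
      have gd2: "map2 (-) (map2 (+) g d) (G (map2 (+) g d)) = d" using dec by metis
      show "c \<in> ?A" unfolding cx mem_ext_app using xA g(3) d(3) gd1 gd2 by auto
    qed
  next
    show "?A \<subseteq> msum ?J ?D"
    proof
      fix c assume "c \<in> ?A"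
      then obtain x t where c: "c = x @ [t]" "x \<in> A" "\<exists>s s'. PJ (G x) s \<and> PD (map2 (-) x (G x)) s' \<and> t = s + s'"
        by (rule ext_elim)
      obtain s s' where ss: "PJ (G x) s" "PD (map2 (-) x (G x)) s'" "t = s + s'" using c(3) by blast
      have l1: "length (G x) = k" using GJ[OF c(2)] lJ by blast
      have l2: "length (map2 (-) x (G x)) = k" using GJ[OF c(2)] lD by blast
      have "c = map2 (+) (G x @ [s]) (map2 (-) x (G x) @ [s'])"
        using c(1) ss(3) sdata_x[OF sd c(2)] l1 l2 by simp
      moreover have "G x @ [s] \<in> ?J" using GJ[OF c(2)] ss by simp
      moreover have "map2 (-) x (G x) @ [s'] \<in> ?D" using GJ[OF c(2)] ss by simp
      ultimately show "c \<in> msum ?J ?D" unfolding msum_def by blast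
    qed
  qed
  have uniq: "\<forall>c\<in>?A. \<exists>!p. fst p \<in> ?J \<and> snd p \<in> ?D \<and> c = map2 (+) (fst p) (snd p)"
  proof
    fix c assume cA: "c \<in> ?A"
    then have "c \<in> msum ?J ?D" using eq by simp
    then obtain g' d' where c: "c = map2 (+) g' d'" "g' \<in> ?J" "d' \<in> ?D" unfolding msum_def by blast
    have key: "p = (g', d')" if p: "fst p \<in> ?J" "snd p \<in> ?D" "c = map2 (+) (fst p) (snd p)" for p
    proof -
      have gen: "g1 = G x @ [S x t] \<and> d1 = map2 (-) x (G x) @ [t - S x t]"
        if hh: "g1 \<in> ?J" "d1 \<in> ?D" "x @ [t] = map2 (+) g1 d1" "x \<in> A" for g1 d1 x t
      proof -
        obtain g s where g: "g1 = g @ [s]" "g \<in> J" "PJ g s" using hh(1) by (rule ext_elim)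
        obtain d s' where d: "d1 = d @ [s']" "d \<in> D" "PD d s'" using hh(2) by (rule ext_elim)
        have lg: "length g = length d" using lJ lD g d by simp
        have "x @ [t] = map2 (+) g d @ [s + s']" using hh(3) g(1) d(1) lg by simp
        then have xe: "x = map2 (+) g d" and te: "t = s + s'" by simp_all
        have gd: "g = G x" "d = map2 (-) x (G x)" using sdata_decomp[OF sd hh(4) g(2) d(2) xe] by simp_all
        have "S x t = s" using Sdet[OF hh(4)] g(3) d(3) te gd by simp
        moreover have "s' = t - s" using te by (simp add: algebra_simps)
        ultimately show ?thesis using g(1) d(1) gd by simp
      qed
      obtain x t where xt: "c = x @ [t]" "x \<in> A" using cA by (rule ext_elim)
      have "fst p = G x @ [S x t] \<and> snd p = map2 (-) x (G x) @ [t - S x t]"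
        using gen[OF p(1) p(2) _ xt(2)] p(3) xt(1) by simp
      moreover have "g' = G x @ [S x t] \<and> d' = map2 (-) x (G x) @ [t - S x t]"
        using gen[OF c(2) c(3) _ xt(2)] c(1) xt(1) by simp
      ultimately show ?thesis by (simp add: prod_eq_iff)
    qed
    show "\<exists>!p. fst p \<in> ?J \<and> snd p \<in> ?D \<and> c = map2 (+) (fst p) (snd p)"
      using c key by (intro ex1I[of _ "(g', d')"]) auto
  qed
  have Gv': "affv (Suc k) (Suc k) ?G"
    unfolding affv_def
  proof (intro conjI allI impI)
    fix y :: "'m list" assume "length y = Suc k"
    then show "length (?G y) = Suc k" using Gv unfolding affv_def by simp
  next
    fix i assume i: "i < Suc k"
    show "aff (Suc k) (\<lambda>y. ?G y ! i)"
    proof (cases "i < k")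
      case True
      have "aff (Suc k) (\<lambda>y. G (butlast y) ! i)" using aff_butlast Gv True unfolding affv_def by blast
      then show ?thesis
      proof (rule aff_cong)
        fix y :: "'m list" assume "length y = Suc k"
        then have "length (G (butlast y)) = k" using Gv unfolding affv_def by simp
        then show "G (butlast y) ! i = ?G y ! i" using True by (simp add: nth_append)
      qed
    next
      case False
      then have ik: "i = k" using i by simp
      show ?thesis using Saff
      proof (rule aff_cong)
        fix y :: "'m list" assume "length y = Suc k"
        then have "length (G (butlast y)) = k" using Gv unfolding affv_def by simp
        then show "S (butlast y) (last y) = ?G y ! i" using ik by (simp add: nth_append)
      qed
    qed
  qed
  have GG: "\<forall>z\<in>?A. ?G z \<in> ?J \<and> map2 (-) z (?G z) \<in> ?D"
  proof
    fix z assume "z \<in> ?A"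
    then obtain x t where c: "z = x @ [t]" "x \<in> A" "\<exists>s s'. PJ (G x) s \<and> PD (map2 (-) x (G x)) s' \<and> t = s + s'"
      by (rule ext_elim)
    obtain s s' where ss: "PJ (G x) s" "PD (map2 (-) x (G x)) s'" "t = s + s'" using c(3) by blast
    have St: "S x t = s" using Sdet[OF c(2) ss] .
    have l1: "length (G x) = length x" using GJ[OF c(2)] lJ sdata_len[OF sd c(2)] by simp
    have "?G z = G x @ [s]" using c(1) St by simp
    moreover have "map2 (-) z (G x @ [s]) = map2 (-) x (G x) @ [s']"
      using c(1) l1 ss(3) by simp
    ultimately show "?G z \<in> ?J \<and> map2 (-) z (?G z) \<in> ?D" using GJ[OF c(2)] ss by simp
  qed
  have lJ': "\<forall>x\<in>?J. length x = Suc k"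
  proof
    fix z assume "z \<in> ?J" then obtain x t where "z = x @ [t]" "x \<in> J" by (rule ext_elim)
    then show "length z = Suc k" using lJ by simp
  qed
  have lD': "\<forall>x\<in>?D. length x = Suc k"
  proof
    fix z assume "z \<in> ?D" then obtain x t where "z = x @ [t]" "x \<in> D" by (rule ext_elim)
    then show "length z = Suc k" using lD by simp
  qed
  show ?thesis unfolding sdata_def using eq uniq Gv' GG lJ' lD' by simp
qed

end


lemma nmax1: "- max a b \<le> - (a::'a::linordered_ab_group_add)"
  using max.cobounded1[of a b] by simp
lemma nmax2: "- max b a \<le> - (a::'a::linordered_ab_group_add)"
  using max.cobounded2[of b a] by simp
lemma maxb1: "- N \<le> t \<Longrightarrow> t \<le> N \<Longrightarrow> - max N B \<le> t \<and> t \<le> max N (B::'a::linordered_ab_group_add)"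
  using order_trans[OF nmax1[of N B]] order_trans[OF _ max.cobounded1[of N B]] by simp
lemma maxb2: "- B \<le> t \<Longrightarrow> t \<le> B \<Longrightarrow> - max N B \<le> t \<and> t \<le> max N (B::'a::linordered_ab_group_add)"
  using order_trans[OF nmax2[of N B]] order_trans[of t B "max N B"] by simp
lemma maxb3: "- B1 \<le> t \<Longrightarrow> t \<le> B2 \<Longrightarrow> - max B1 B2 \<le> t \<and> t \<le> max B1 (B2::'a::linordered_ab_group_add)"
  using order_trans[OF nmax1[of B1 B2]] order_trans[of t B2 "max B1 B2"] by simp

context ovs2 begin

lemma pu_graph_ext: "purely_unbounded k (J::'m list set) \<Longrightarrow> (\<forall>g\<in>J. length g = k) \<Longrightarrow>
   purely_unbounded (Suc k) (ext J (\<lambda>g s. s = \<tau> g))"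
proof -
  assume pu: "purely_unbounded k J" and l: "\<forall>g\<in>J. length g = k"
  let ?C = "ext J (\<lambda>g s. s = \<tau> g)"
  have len: "\<forall>x\<in>?C. length x = Suc k"
  proof
    fix z assume "z \<in> ?C" then obtain x t where "z = x @ [t]" "x \<in> J" by (rule ext_elim)
    then show "length z = Suc k" using l by simp
  qed
  have g: "is_graph ?C" unfolding is_graph_def
  proof (intro ballI impI)
    fix z1 z2 assume z1: "z1 \<in> ?C" and z2: "z2 \<in> ?C" and b: "butlast z1 = butlast z2"
    obtain x1 t1 where 1: "z1 = x1 @ [t1]" "x1 \<in> J" "t1 = \<tau> x1" using z1 by (rule ext_elim)
    obtain x2 t2 where 2: "z2 = x2 @ [t2]" "x2 \<in> J" "t2 = \<tau> x2" using z2 by (rule ext_elim)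
    show "z1 = z2" using 1 2 b by simp
  qed
  have bl: "butlast ` ?C = J" by (rule butlast_ext) blast
  show ?thesis using len g pu bl by simp
qed

lemma pu_cyl_ext: "purely_unbounded k (J::'m list set) \<Longrightarrow> (\<forall>g\<in>J. length g = k) \<Longrightarrow> (\<forall>g\<in>J. \<exists>s. P g s) \<Longrightarrow>
   (\<forall>N\<ge>0. \<exists>g\<in>J. \<exists>s1 s2. P g s1 \<and> P g s2 \<and> s1 + N < s2) \<Longrightarrow>
   purely_unbounded (Suc k) (ext J P)"
proof -
  assume pu: "purely_unbounded k J" and l: "\<forall>g\<in>J. length g = k" and ne: "\<forall>g\<in>J. \<exists>s. P g s"
    and w: "\<forall>N\<ge>0. \<exists>g\<in>J. \<exists>s1 s2. P g s1 \<and> P g s2 \<and> s1 + N < s2"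
  let ?C = "ext J P"
  have len: "\<forall>x\<in>?C. length x = Suc k"
  proof
    fix z assume "z \<in> ?C" then obtain x t where "z = x @ [t]" "x \<in> J" by (rule ext_elim)
    then show "length z = Suc k" using l by simp
  qed
  have ng: "\<not> is_graph ?C"
  proof
    assume g: "is_graph ?C"
    obtain g0 s1 s2 where h: "g0 \<in> J" "P g0 s1" "P g0 s2" "s1 + 0 < s2" using w by blast
    have "g0 @ [s1] \<in> ?C" "g0 @ [s2] \<in> ?C" using h by simp_all
    then have "g0 @ [s1] = g0 @ [s2]" using g unfolding is_graph_def by (metis butlast_snoc)
    then show False using h(4) by simp
  qed
  have bl: "butlast ` ?C = J" by (rule butlast_ext) (use ne in blast)
  have unb: "\<forall>N\<ge>0. \<exists>x\<in>?C. \<not> fiber ?C (butlast x) \<subseteq> {last x - N..last x + N}"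
  proof (intro allI impI)
    fix N :: 'm assume "0 \<le> N"
    then obtain g0 s1 s2 where h: "g0 \<in> J" "P g0 s1" "P g0 s2" "s1 + N < s2" using w by blast
    have m: "g0 @ [s1] \<in> ?C" using h by simp
    have "s2 \<in> fiber ?C (butlast (g0 @ [s1]))" using h by (simp add: fiber_def)
    moreover have "s2 \<notin> {last (g0 @ [s1]) - N..last (g0 @ [s1]) + N}" using h(4) by (auto simp: not_le)
    ultimately show "\<exists>x\<in>?C. \<not> fiber ?C (butlast x) \<subseteq> {last x - N..last x + N}" using m by blast
  qed
  show ?thesis using len ng pu bl unb by simp
qed

lemma sm_bounded: "\<exists>b. \<forall>y. - N \<le> y \<and> y \<le> N \<longrightarrow> - b \<le> sm l y \<and> sm l y \<le> b"
proof (cases "0 \<le> l")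
  case True
  show ?thesis
  proof (intro exI[of _ "sm l N"] allI impI)
    fix y assume "- N \<le> y \<and> y \<le> N"
    then show "- sm l N \<le> sm l y \<and> sm l y \<le> sm l N"
      using sm_mono_le[OF True, of "-N" y] sm_mono_le[OF True, of y N] sm_neg2 by simp
  qed
next
  case False
  then have nl: "0 \<le> -l" by simp
  show ?thesis
  proof (intro exI[of _ "sm (-l) N"] allI impI)
    fix y assume "- N \<le> y \<and> y \<le> N"
    then have "- sm (-l) N \<le> sm (-l) y \<and> sm (-l) y \<le> sm (-l) N"
      using sm_mono_le[OF nl, of "-N" y] sm_mono_le[OF nl, of y N] sm_neg2 by simp
    moreover have "sm (-l) y = - sm l y" by (rule sm_neg1)
    ultimately show "- sm (-l) N \<le> sm l y \<and> sm l y \<le> sm (-l) N" by (auto simp: minus_le_iff le_minus_iff)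
  qed
qed

lemma lf_bounded: "\<exists>B. \<forall>ys. length ys = length ls \<longrightarrow> (\<forall>t\<in>set ys. - N \<le> t \<and> t \<le> N) \<longrightarrow>
   - B \<le> lf sm ls a ys \<and> lf sm ls a ys \<le> B"
proof (induction ls)
  case Nil
  show ?case by (intro exI[of _ "max a (-a)"]) (auto simp: lf_Nil minus_le_iff)
next
  case (Cons l ls)
  obtain B0 where B0: "\<forall>ys. length ys = length ls \<longrightarrow> (\<forall>t\<in>set ys. - N \<le> t \<and> t \<le> N) \<longrightarrow>
   - B0 \<le> lf sm ls a ys \<and> lf sm ls a ys \<le> B0" using Cons.IH by blast
  obtain b where b: "\<forall>y. - N \<le> y \<and> y \<le> N \<longrightarrow> - b \<le> sm l y \<and> sm l y \<le> b" using sm_bounded by blast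
  show ?case
  proof (intro exI[of _ "b + B0"] allI impI)
    fix ys :: "'m list" assume l: "length ys = length (l # ls)" and r: "\<forall>t\<in>set ys. - N \<le> t \<and> t \<le> N"
    then obtain y ys' where ys: "ys = y # ys'" by (cases ys) auto
    have 1: "- b \<le> sm l y \<and> sm l y \<le> b" using b r ys by simp
    have 2: "- B0 \<le> lf sm ls a ys' \<and> lf sm ls a ys' \<le> B0" using B0 l r ys by simp
    have "- b + - B0 \<le> sm l y + lf sm ls a ys'" using 1 2 add_mono by blast
    moreover have "sm l y + lf sm ls a ys' \<le> b + B0" using 1 2 add_mono by blast
    ultimately show "- (b + B0) \<le> lf sm (l # ls) a ys \<and> lf sm (l # ls) a ys \<le> b + B0"
      using ys by (simp add: lf_Cons)
  qed
qed

lemma aff_bounded: "bounded_set k D \<Longrightarrow> aff k f \<Longrightarrow> \<exists>B. \<forall>d\<in>D. - B \<le> f d \<and> f d \<le> B"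
proof -
  assume bd: "bounded_set k D" and f: "aff k f"
  obtain N where N: "\<forall>d\<in>D. \<forall>t\<in>set d. - N \<le> t \<and> t \<le> N" and l: "\<forall>d\<in>D. length d = k"
    using bd unfolding bounded_set_def by blast
  obtain ls a where ls: "length ls = k" "\<forall>x. length x = k \<longrightarrow> f x = lf sm ls a x" using aff_ex[OF f] by blast
  obtain B where B: "\<forall>ys. length ys = length ls \<longrightarrow> (\<forall>t\<in>set ys. - N \<le> t \<and> t \<le> N) \<longrightarrow>
   - B \<le> lf sm ls a ys \<and> lf sm ls a ys \<le> B" using lf_bounded by blast
  show ?thesis using B N l ls by (intro exI[of _ B]) auto
qed

lemma bounded_ext: "bounded_set k D \<Longrightarrow> (\<forall>d\<in>D. \<forall>s. P d s \<longrightarrow> - B \<le> s \<and> s \<le> B) \<Longrightarrow>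
   bounded_set (Suc k) (ext D P)"
proof -
  assume bd: "bounded_set k D" and P: "\<forall>d\<in>D. \<forall>s. P d s \<longrightarrow> - B \<le> s \<and> s \<le> B"
  obtain N where N: "\<forall>d\<in>D. \<forall>t\<in>set d. - N \<le> t \<and> t \<le> N" and l: "\<forall>d\<in>D. length d = k"
    using bd unfolding bounded_set_def by blast
  show ?thesis unfolding bounded_set_def
  proof (rule conjI)
    show "\<forall>z\<in>ext D P. length z = Suc k"
    proof
      fix z assume "z \<in> ext D P" then obtain x t where "z = x @ [t]" "x \<in> D" by (rule ext_elim)
      then show "length z = Suc k" using l by simp
    qed
  next
    show "\<exists>N. \<forall>d\<in>ext D P. \<forall>t\<in>set d. - N \<le> t \<and> t \<le> N"
    proof (rule exI[of _ "max N B"], intro ballI)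
    fix z t assume z: "z \<in> ext D P" and t: "t \<in> set z"
    obtain x s where x: "z = x @ [s]" "x \<in> D" "P x s" using z by (rule ext_elim)
    have "t \<in> set x \<or> t = s" using t x(1) by auto
    then show "- max N B \<le> t \<and> t \<le> max N B"
    proof
      assume "t \<in> set x" then have "- N \<le> t \<and> t \<le> N" using N x(2) by blast
      then show ?thesis using maxb1 by blast
    next
      assume "t = s" then have "- B \<le> t \<and> t \<le> B" using P x by blast
      then show ?thesis using maxb2 by blast
    qed
  qed
  qed
qed

lemma bounded_graph: "bounded_set k D \<Longrightarrow> aff k f \<Longrightarrow> bounded_set (Suc k) (ext D (\<lambda>d s. s = f d))"
proof -
  assume bd: "bounded_set k D" and f: "aff k f"
  obtain B where "\<forall>d\<in>D. - B \<le> f d \<and> f d \<le> B" using aff_bounded[OF bd f] by blast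
  then show ?thesis by (intro bounded_ext[OF bd, of _ B]) auto
qed

lemma bounded_cyl2: "bounded_set k D \<Longrightarrow> aff k f \<Longrightarrow> aff k h \<Longrightarrow>
   bounded_set (Suc k) (ext D (\<lambda>d s. f d < s \<and> s < h d))"
proof -
  assume bd: "bounded_set k D" and f: "aff k f" and h: "aff k h"
  obtain B1 where B1: "\<forall>d\<in>D. - B1 \<le> f d \<and> f d \<le> B1" using aff_bounded[OF bd f] by blast
  obtain B2 where B2: "\<forall>d\<in>D. - B2 \<le> h d \<and> h d \<le> B2" using aff_bounded[OF bd h] by blast
  have "\<forall>d\<in>D. \<forall>s. f d < s \<and> s < h d \<longrightarrow> - max B1 B2 \<le> s \<and> s \<le> max B1 B2"
  proof (intro ballI allI impI)
    fix d s assume d: "d \<in> D" and s: "f d < s \<and> s < h d"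
    have "- B1 \<le> s" using B1 d s by (meson less_imp_le order_trans)
    moreover have "s \<le> B2" using B2 d s by (meson less_imp_le order_trans)
    ultimately show "- max B1 B2 \<le> s \<and> s \<le> max B1 B2" using maxb3 by blast
  qed
  then show ?thesis by (rule bounded_ext[OF bd])
qed

lemma vsub_affv: "affv k k G \<Longrightarrow> affv k k (\<lambda>x. map2 (-) x (G x))"
  unfolding affv_def
proof (intro conjI allI impI)
  assume G: "(\<forall>y. length y = k \<longrightarrow> length (G y) = k) \<and> (\<forall>i<k. aff k (\<lambda>y. G y ! i))"
  fix y :: "'m list" assume "length y = k"
  then show "length (map2 (-) y (G y)) = k" using G by simp
next
  assume G: "(\<forall>y. length y = k \<longrightarrow> length (G y) = k) \<and> (\<forall>i<k. aff k (\<lambda>y. G y ! i))"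
  fix i assume i: "i < k"
  have "aff k (\<lambda>y. y ! i - G y ! i)" using G i aff_proj[OF i] by (intro aff_diff) auto
  then show "aff k (\<lambda>y. map2 (-) y (G y) ! i)"
    by (rule aff_cong) (use G i in simp)
qed

lemma lf_split: "sdata k J D G A \<Longrightarrow> x \<in> A \<Longrightarrow> length ls = k \<Longrightarrow>
   lf sm ls a x = lf sm ls 0 (G x) + lf sm ls a (map2 (-) x (G x))"
proof -
  assume sd: "sdata k J D G A" and x: "x \<in> A" and ls: "length ls = k"
  have "G x \<in> J" using sd x unfolding sdata_def by blast
  then have lg: "length (G x) = k" using sd unfolding sdata_def by blast
  have lx: "length x = k" using sdata_len[OF sd x] .
  have "lf sm ls a x = lf sm ls a (map2 (+) (G x) (map2 (-) x (G x)))"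
    using sdata_x[OF sd x] by simp
  also have "\<dots> = lf sm ls 0 (G x) + lf sm ls a (map2 (-) x (G x))"
    by (rule lf_add) (use ls lg lx in simp_all)
  finally show ?thesis .
qed

end


lemma ext_Int_pred: "ext A P \<inter> ext A Q = ext A (\<lambda>x t. P x t \<and> Q x t)"
  by (auto simp: mem_ext)

lemma ext_empty: "(\<And>x t. x \<in> A \<Longrightarrow> \<not> P x t) \<Longrightarrow> ext A P = {}"
  by (auto simp: mem_ext)

context ovs2 begin

lemma piece:
  assumes "linear_cell sm k J" "purely_unbounded k J" "linear_cell sm k D" "bounded_set k D"
    and sd: "sdata k J D G A"
    and "linear_cell sm (Suc k) (ext J PJ)" "purely_unbounded (Suc k) (ext J PJ)"
    and "linear_cell sm (Suc k) (ext D PD)" "bounded_set (Suc k) (ext D PD)"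
    and Saff: "aff (Suc k) (\<lambda>y. S (butlast y) (last y))"
    and Sdet: "\<And>x t s s'. x \<in> A \<Longrightarrow> PJ (G x) s \<Longrightarrow> PD (map2 (-) x (G x)) s' \<Longrightarrow> t = s + s' \<Longrightarrow> S x t = s"
    and "linear_cell sm (Suc k) (ext A R)"
    and R: "\<And>x t. x \<in> A \<Longrightarrow> R x t \<longleftrightarrow> (\<exists>s s'. PJ (G x) s \<and> PD (map2 (-) x (G x)) s' \<and> t = s + s')"
  shows "sprod (Suc k) (ext A R)"
proof -
  have e: "ext A R = ext A (\<lambda>x t. \<exists>s s'. PJ (G x) s \<and> PD (map2 (-) x (G x)) s' \<and> t = s + s')"
    using R by (rule ext_cong)
  have "sdata (Suc k) (ext J PJ) (ext D PD) (\<lambda>y. G (butlast y) @ [S (butlast y) (last y)]) (ext A R)"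
    unfolding e by (rule ext_prod[OF sd Saff Sdet])
  then show ?thesis unfolding sprod_def using assms by blast
qed

lemma sprodE:
  assumes "sprod k A"
  obtains J D G where "linear_cell sm k A" "linear_cell sm k J" "purely_unbounded k J" "linear_cell sm k D"
    "bounded_set k D" "sdata k J D G A"
  using assms unfolding sprod_def by blast

lemma sdata_lens: "sdata k J D G A \<Longrightarrow> (\<forall>g\<in>J. length g = k) \<and> (\<forall>d\<in>D. length d = k) \<and> affv k k G
   \<and> (\<forall>x\<in>A. G x \<in> J \<and> map2 (-) x (G x) \<in> D)"
  unfolding sdata_def by blast

lemma piece_graph: "sprod k A \<Longrightarrow> length ls = k \<Longrightarrow> sprod (Suc k) (ext A (\<lambda>x t. t = lf sm ls a x))"
proof -
  assume sp: "sprod k A" and ls: "length ls = k"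
  obtain J D G where h: "linear_cell sm k A" "linear_cell sm k J" "purely_unbounded k J" "linear_cell sm k D"
    "bounded_set k D" "sdata k J D G A" using sp by (rule sprodE)
  have L: "\<forall>g\<in>J. length g = k" "\<forall>d\<in>D. length d = k" "affv k k G" using sdata_lens[OF h(6)] by blast+
  show ?thesis
  proof (rule piece[OF h(2-6), where PJ = "\<lambda>g s. s = lf sm ls 0 g" and PD = "\<lambda>d s. s = lf sm ls a d"
        and S = "\<lambda>x t. lf sm ls 0 (G x)"])
    show "linear_cell sm (Suc k) (ext J (\<lambda>g s. s = lf sm ls 0 g))" by (rule cell_graph[OF h(2) aff_lf[OF ls]])
    show "purely_unbounded (Suc k) (ext J (\<lambda>g s. s = lf sm ls 0 g))" by (rule pu_graph_ext[OF h(3) L(1)])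
    show "linear_cell sm (Suc k) (ext D (\<lambda>g s. s = lf sm ls a g))" by (rule cell_graph[OF h(4) aff_lf[OF ls]])
    show "bounded_set (Suc k) (ext D (\<lambda>g s. s = lf sm ls a g))" by (rule bounded_graph[OF h(5) aff_lf[OF ls]])
    show "aff (Suc k) (\<lambda>y. lf sm ls 0 (G (butlast y)))" by (rule aff_butlast[OF aff_comp[OF aff_lf[OF ls] L(3)]])
    show "linear_cell sm (Suc k) (ext A (\<lambda>x t. t = lf sm ls a x))" by (rule cell_graph[OF h(1) aff_lf[OF ls]])
  next
    fix x t s s' assume "s = lf sm ls 0 (G x)"
    then show "lf sm ls 0 (G x) = s" by simp
  next
    fix x t assume x: "x \<in> A"
    show "t = lf sm ls a x \<longleftrightarrow> (\<exists>s s'. s = lf sm ls 0 (G x) \<and> s' = lf sm ls a (map2 (-) x (G x)) \<and> t = s + s')"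
      using lf_split[OF h(6) x ls] by simp
  qed
qed

lemma some_pos: "\<exists>e::'m. 0 < e" by (rule nontriv)

lemma piece_none: "sprod k A \<Longrightarrow> sprod (Suc k) (ext A (\<lambda>x t. True))"
proof -
  assume sp: "sprod k A"
  obtain J D G where h: "linear_cell sm k A" "linear_cell sm k J" "purely_unbounded k J" "linear_cell sm k D"
    "bounded_set k D" "sdata k J D G A" using sp by (rule sprodE)
  have L: "\<forall>g\<in>J. length g = k" "\<forall>d\<in>D. length d = k" "affv k k G" using sdata_lens[OF h(6)] by blast+
  obtain e :: 'm where e: "0 < e" using nontriv by blast
  obtain g0 where g0: "g0 \<in> J" using cell_ne[OF h(2)] by blast
  show ?thesis
  proof (rule piece[OF h(2-6), where PJ = "\<lambda>g s. True" and PD = "\<lambda>d s. s = 0"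
        and S = "\<lambda>x t. t"])
    show "linear_cell sm (Suc k) (ext J (\<lambda>g s. True))" by (rule cell_cyl_none[OF h(2)])
    show "purely_unbounded (Suc k) (ext J (\<lambda>g s. True))"
    proof (rule pu_cyl_ext[OF h(3) L(1)])
      show "\<forall>N\<ge>0. \<exists>g\<in>J. \<exists>s1 s2. True \<and> True \<and> s1 + N < (s2::'m)"
      proof (intro allI impI)
        fix N :: 'm assume "0 \<le> N"
        have "0 + N < N + e" using e by simp
        then show "\<exists>g\<in>J. \<exists>s1 s2. True \<and> True \<and> s1 + N < s2" using g0 by blast
      qed
    qed simp
    show "linear_cell sm (Suc k) (ext D (\<lambda>g s. s = 0))" using cell_graph[OF h(4) aff_const[of k 0]] .
    show "bounded_set (Suc k) (ext D (\<lambda>g s. s = 0))" using bounded_graph[OF h(5) aff_const[of k 0]] .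
    show "aff (Suc k) (\<lambda>y. last y)" by (rule aff_last)
    show "linear_cell sm (Suc k) (ext A (\<lambda>x t. True))" by (rule cell_cyl_none[OF h(1)])
  next
    fix x t s s' assume "s' = (0::'m)" "t = s + s'"
    then show "t = s" by simp
  next
    fix x t assume x: "x \<in> A"
    show "True \<longleftrightarrow> (\<exists>s s'. True \<and> s' = 0 \<and> t = s + (s'::'m))" by simp
  qed
qed

lemma piece_lo: "sprod k A \<Longrightarrow> length ls = k \<Longrightarrow> sprod (Suc k) (ext A (\<lambda>x t. lf sm ls a x < t))"
proof -
  assume sp: "sprod k A" and ls: "length ls = k"
  obtain J D G where h: "linear_cell sm k A" "linear_cell sm k J" "purely_unbounded k J" "linear_cell sm k D"
    "bounded_set k D" "sdata k J D G A" using sp by (rule sprodE)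
  have L: "\<forall>g\<in>J. length g = k" "\<forall>d\<in>D. length d = k" "affv k k G" using sdata_lens[OF h(6)] by blast+
  obtain e :: 'm where e: "0 < e" using nontriv by blast
  obtain g0 where g0: "g0 \<in> J" using cell_ne[OF h(2)] by blast
  show ?thesis
  proof (rule piece[OF h(2-6), where PJ = "\<lambda>g s. lf sm ls 0 g < s" and PD = "\<lambda>d s. s = lf sm ls a d"
        and S = "\<lambda>x t. t - lf sm ls a (map2 (-) x (G x))"])
    show "linear_cell sm (Suc k) (ext J (\<lambda>g s. lf sm ls 0 g < s))" by (rule cell_cyl_lo[OF h(2) aff_lf[OF ls]])
    show "purely_unbounded (Suc k) (ext J (\<lambda>g s. lf sm ls 0 g < s))"
    proof (rule pu_cyl_ext[OF h(3) L(1)])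
      show "\<forall>g\<in>J. \<exists>s. lf sm ls 0 g < s" using no_top by blast
      show "\<forall>N\<ge>0. \<exists>g\<in>J. \<exists>s1 s2. lf sm ls 0 g < s1 \<and> lf sm ls 0 g < s2 \<and> s1 + N < s2"
      proof (intro allI impI bexI[OF _ g0])
        fix N :: 'm assume N: "0 \<le> N"
        have 1: "lf sm ls 0 g0 < lf sm ls 0 g0 + e" using e by simp
        have 2: "lf sm ls 0 g0 + e + N < lf sm ls 0 g0 + e + N + e" using e by simp
        have 4: "lf sm ls 0 g0 + e \<le> lf sm ls 0 g0 + e + N" using N by simp
        have 3: "lf sm ls 0 g0 < lf sm ls 0 g0 + e + N + e" using less_le_trans[OF 1 4] 2 by (rule less_trans)
        show "\<exists>s1 s2. lf sm ls 0 g0 < s1 \<and> lf sm ls 0 g0 < s2 \<and> s1 + N < s2"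
          using 1 2 3 by blast
      qed
    qed
    show "linear_cell sm (Suc k) (ext D (\<lambda>g s. s = lf sm ls a g))" by (rule cell_graph[OF h(4) aff_lf[OF ls]])
    show "bounded_set (Suc k) (ext D (\<lambda>g s. s = lf sm ls a g))" by (rule bounded_graph[OF h(5) aff_lf[OF ls]])
    show "aff (Suc k) (\<lambda>y. last y - lf sm ls a (map2 (-) (butlast y) (G (butlast y))))"
      by (rule aff_diff[OF aff_last aff_butlast[OF aff_comp[OF aff_lf[OF ls] vsub_affv[OF L(3)]]]])
    show "linear_cell sm (Suc k) (ext A (\<lambda>x t. lf sm ls a x < t))" by (rule cell_cyl_lo[OF h(1) aff_lf[OF ls]])
  next
    fix x t s s' assume "s' = lf sm ls a (map2 (-) x (G x))" "t = s + s'"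
    then show "t - lf sm ls a (map2 (-) x (G x)) = s" by simp
  next
    fix x t assume x: "x \<in> A"
    have e: "lf sm ls a x = lf sm ls 0 (G x) + lf sm ls a (map2 (-) x (G x))" using lf_split[OF h(6) x ls] .
    show "lf sm ls a x < t \<longleftrightarrow> (\<exists>s s'. lf sm ls 0 (G x) < s \<and> s' = lf sm ls a (map2 (-) x (G x)) \<and> t = s + s')"
    proof
      assume "lf sm ls a x < t"
      then have "lf sm ls 0 (G x) < t - lf sm ls a (map2 (-) x (G x))" using e by (simp add: less_diff_eq)
      then show "\<exists>s s'. lf sm ls 0 (G x) < s \<and> s' = lf sm ls a (map2 (-) x (G x)) \<and> t = s + s'"
        by (intro exI[of _ "t - lf sm ls a (map2 (-) x (G x))"] exI[of _ "lf sm ls a (map2 (-) x (G x))"]) simp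
    next
      assume "\<exists>s s'. lf sm ls 0 (G x) < s \<and> s' = lf sm ls a (map2 (-) x (G x)) \<and> t = s + s'"
      then obtain s where "lf sm ls 0 (G x) < s" "t = s + lf sm ls a (map2 (-) x (G x))" by blast
      then show "lf sm ls a x < t" using e add_strict_right_mono by metis
    qed
  qed
qed

lemma piece_hi: "sprod k A \<Longrightarrow> length ls = k \<Longrightarrow> sprod (Suc k) (ext A (\<lambda>x t. t < lf sm ls a x))"
proof -
  assume sp: "sprod k A" and ls: "length ls = k"
  obtain J D G where h: "linear_cell sm k A" "linear_cell sm k J" "purely_unbounded k J" "linear_cell sm k D"
    "bounded_set k D" "sdata k J D G A" using sp by (rule sprodE)
  have L: "\<forall>g\<in>J. length g = k" "\<forall>d\<in>D. length d = k" "affv k k G" using sdata_lens[OF h(6)] by blast+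
  obtain e :: 'm where e: "0 < e" using nontriv by blast
  obtain g0 where g0: "g0 \<in> J" using cell_ne[OF h(2)] by blast
  show ?thesis
  proof (rule piece[OF h(2-6), where PJ = "\<lambda>g s. s < lf sm ls 0 g" and PD = "\<lambda>d s. s = lf sm ls a d"
        and S = "\<lambda>x t. t - lf sm ls a (map2 (-) x (G x))"])
    show "linear_cell sm (Suc k) (ext J (\<lambda>g s. s < lf sm ls 0 g))" by (rule cell_cyl_hi[OF h(2) aff_lf[OF ls]])
    show "purely_unbounded (Suc k) (ext J (\<lambda>g s. s < lf sm ls 0 g))"
    proof (rule pu_cyl_ext[OF h(3) L(1)])
      show "\<forall>g\<in>J. \<exists>s. s < lf sm ls 0 g" using no_bot by blast
      show "\<forall>N\<ge>0. \<exists>g\<in>J. \<exists>s1 s2. s1 < lf sm ls 0 g \<and> s2 < lf sm ls 0 g \<and> s1 + N < s2"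
      proof (intro allI impI bexI[OF _ g0])
        fix N :: 'm assume N: "0 \<le> N"
        have 1: "lf sm ls 0 g0 - e < lf sm ls 0 g0" using e by simp
        have 2: "lf sm ls 0 g0 - e - N - e + N < lf sm ls 0 g0 - e" using e by simp
        have 4: "lf sm ls 0 g0 - e - N - e \<le> lf sm ls 0 g0 - e - N - e + N" using N by simp
        have 3: "lf sm ls 0 g0 - e - N - e < lf sm ls 0 g0" using le_less_trans[OF 4 2] 1 by (rule less_trans)
        show "\<exists>s1 s2. s1 < lf sm ls 0 g0 \<and> s2 < lf sm ls 0 g0 \<and> s1 + N < s2"
          using 1 2 3 by blast
      qed
    qed
    show "linear_cell sm (Suc k) (ext D (\<lambda>g s. s = lf sm ls a g))" by (rule cell_graph[OF h(4) aff_lf[OF ls]])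
    show "bounded_set (Suc k) (ext D (\<lambda>g s. s = lf sm ls a g))" by (rule bounded_graph[OF h(5) aff_lf[OF ls]])
    show "aff (Suc k) (\<lambda>y. last y - lf sm ls a (map2 (-) (butlast y) (G (butlast y))))"
      by (rule aff_diff[OF aff_last aff_butlast[OF aff_comp[OF aff_lf[OF ls] vsub_affv[OF L(3)]]]])
    show "linear_cell sm (Suc k) (ext A (\<lambda>x t. t < lf sm ls a x))" by (rule cell_cyl_hi[OF h(1) aff_lf[OF ls]])
  next
    fix x t s s' assume "s' = lf sm ls a (map2 (-) x (G x))" "t = s + s'"
    then show "t - lf sm ls a (map2 (-) x (G x)) = s" by simp
  next
    fix x t assume x: "x \<in> A"
    have e: "lf sm ls a x = lf sm ls 0 (G x) + lf sm ls a (map2 (-) x (G x))" using lf_split[OF h(6) x ls] .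
    show "t < lf sm ls a x \<longleftrightarrow> (\<exists>s s'. s < lf sm ls 0 (G x) \<and> s' = lf sm ls a (map2 (-) x (G x)) \<and> t = s + s')"
    proof
      assume "t < lf sm ls a x"
      then have "t - lf sm ls a (map2 (-) x (G x)) < lf sm ls 0 (G x)" using e by (simp add: diff_less_eq)
      then show "\<exists>s s'. s < lf sm ls 0 (G x) \<and> s' = lf sm ls a (map2 (-) x (G x)) \<and> t = s + s'"
        by (intro exI[of _ "t - lf sm ls a (map2 (-) x (G x))"] exI[of _ "lf sm ls a (map2 (-) x (G x))"]) simp
    next
      assume "\<exists>s s'. s < lf sm ls 0 (G x) \<and> s' = lf sm ls a (map2 (-) x (G x)) \<and> t = s + s'"
      then obtain s where "s < lf sm ls 0 (G x)" "t = s + lf sm ls a (map2 (-) x (G x))" by blast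
      then show "t < lf sm ls a x" using e add_strict_right_mono by metis
    qed
  qed
qed

end


lemma shift2: "(\<exists>s. u < s \<and> s < w \<and> t = s + v) \<longleftrightarrow> (u + v < t \<and> t < w + (v::'a::ordered_ab_group_add))"
proof
  assume "\<exists>s. u < s \<and> s < w \<and> t = s + v"
  then obtain s where "u < s" "s < w" "t = s + v" by blast
  then show "u + v < t \<and> t < w + v" by (simp add: add_strict_right_mono)
next
  assume h: "u + v < t \<and> t < w + v"
  have "u < t - v" "t - v < w" "t = (t - v) + v" using h by (simp_all add: less_diff_eq diff_less_eq)
  then show "\<exists>s. u < s \<and> s < w \<and> t = s + v" by blast
qed

lemma shift3: "(\<exists>s'. u < s' \<and> s' < w \<and> t = b + s') \<longleftrightarrow> (b + u < t \<and> t < b + (w::'a::ordered_ab_group_add))"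
  using shift2[of u w t b] by (simp add: add.commute)

lemma grpA: "a + b < c + d \<Longrightarrow> b - d < c - (a::'a::ordered_ab_group_add)"
  by (simp add: less_diff_eq diff_less_eq algebra_simps)

lemma grpB: "a + b < c + d \<Longrightarrow> c - a = e \<Longrightarrow> b < d + (e::'a::ordered_ab_group_add)"
  by (auto simp: less_diff_eq diff_less_eq algebra_simps)

lemma grpC: "a + b < c + d \<Longrightarrow> c - a < - (d - b) \<Longrightarrow> (False::bool)" for a b c d :: "'a::ordered_ab_group_add"
  by (simp add: less_diff_eq diff_less_eq algebra_simps)

lemma grpE: "0 < (b - a) + c \<Longrightarrow> a < b + (c::'a::ordered_ab_group_add)"
  by (simp add: less_diff_eq diff_less_eq algebra_simps)

lemma grpD: "c + w < b - a \<Longrightarrow> a + w < b - (c::'a::ordered_ab_group_add)"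
  by (simp add: less_diff_eq diff_less_eq algebra_simps)

lemma grpF: "c < b - a \<Longrightarrow> a < b - (c::'a::ordered_ab_group_add)"
  by (simp add: less_diff_eq diff_less_eq algebra_simps)

lemma grpG: "(b - a) + c = 0 \<Longrightarrow> b = a - (c::'a::ab_group_add)"
  by (simp add: algebra_simps eq_diff_eq)

lemma wid: "0 < e \<Longrightarrow> 0 \<le> N \<Longrightarrow> a + (e + N + e) < b \<Longrightarrow>
   (a < a + e \<and> a + e < b) \<and> (a < a + (e + N + e) \<and> a + (e + N + e) < b) \<and> (a + e) + N < a + (e + N + (e::'a::ordered_ab_group_add))"
proof -
  assume e: "0 < e" and N: "0 \<le> N" and h: "a + (e + N + e) < b"
  have 1: "a < a + e" using e by simp
  have "0 \<le> N + e" using N e by simp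
  then have "e \<le> e + (N + e)" by simp
  then have 2: "a + e \<le> a + (e + N + e)" by (simp add: add.assoc)
  have 3: "a + e + N < a + (e + N + e)" using e by (simp add: algebra_simps)
  show ?thesis using 1 2 3 h less_le_trans le_less_trans by (metis order.strict_trans)
qed

lemma ord3: "a < m \<Longrightarrow> m < b \<Longrightarrow> ((a < t \<and> t < m) \<or> t = m \<or> (m < t \<and> t < b)) \<longleftrightarrow> (a < t \<and> t < (b::'a::linorder))"
  using less_trans neq_iff by metis

context ovs2 begin

lemma piece_both:
  assumes sp: "sprod k A" and l1: "length ls1 = k" and l2: "length ls2 = k"
    and lt: "\<forall>x\<in>A. lf sm ls1 a1 x < lf sm ls2 a2 x"
  shows "\<exists>Q. finite Q \<and> \<Union>Q = ext A (\<lambda>x t. lf sm ls1 a1 x < t \<and> t < lf sm ls2 a2 x) \<and>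
     (\<forall>P1\<in>Q. \<forall>P2\<in>Q. P1 \<noteq> P2 \<longrightarrow> P1 \<inter> P2 = {}) \<and> (\<forall>B\<in>Q. sprod (Suc k) B)"
proof -
  obtain J D G where h: "linear_cell sm k A" "linear_cell sm k J" "purely_unbounded k J" "linear_cell sm k D"
    "bounded_set k D" "sdata k J D G A" using sp by (rule sprodE)
  have L: "\<forall>g\<in>J. length g = k" "\<forall>d\<in>D. length d = k" "affv k k G" using sdata_lens[OF h(6)] by blast+
  have GD: "\<And>x. x \<in> A \<Longrightarrow> G x \<in> J \<and> map2 (-) x (G x) \<in> D" using sdata_lens[OF h(6)] by blast
  obtain e :: 'm where e: "0 < e" using nontriv by blast
  define al where "al g = lf sm ls1 0 g" for g
  define be where "be g = lf sm ls2 0 g" for g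
  define ad where "ad d = lf sm ls1 a1 d" for d
  define bd where "bd d = lf sm ls2 a2 d" for d
  define p where "p g = be g - al g" for g
  have affs: "aff k al" "aff k be" "aff k ad" "aff k bd" "aff k p"
    unfolding al_def be_def ad_def bd_def p_def by (intro aff_lf aff_diff l1 l2)+
  have split: "lf sm ls1 a1 x = al (G x) + ad (map2 (-) x (G x)) \<and> lf sm ls2 a2 x = be (G x) + bd (map2 (-) x (G x))"
    if "x \<in> A" for x
    using lf_split[OF h(6) that l1] lf_split[OF h(6) that l2] by (simp add: al_def ad_def be_def bd_def)
  have W: "al g + ad d < be g + bd d" if g: "g \<in> J" and d: "d \<in> D" for g d
  proof -
    have xA: "map2 (+) g d \<in> A" using h(6) g d unfolding sdata_def msum_def by blast
    have dec: "g = G (map2 (+) g d) \<and> d = map2 (-) (map2 (+) g d) (G (map2 (+) g d))"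
      using sdata_decomp[OF h(6) xA g d refl] .
    have d1: "G (map2 (+) g d) = g" using dec by metis
    have d2: "map2 (-) (map2 (+) g d) (G (map2 (+) g d)) = d" using dec by metis
    have "lf sm ls1 a1 (map2 (+) g d) < lf sm ls2 a2 (map2 (+) g d)" using lt xA by blast
    have d3: "map2 (-) (map2 (+) g d) g = d" using d2 unfolding d1 .
    then show ?thesis using split[OF xA] \<open>lf sm ls1 a1 (map2 (+) g d) < lf sm ls2 a2 (map2 (+) g d)\<close>
      unfolding d1 d3 by simp
  qed
  obtain d0 where d0: "d0 \<in> D" using cell_ne[OF h(4)] by blast
  obtain g0 where g0: "g0 \<in> J" using cell_ne[OF h(2)] by blast
  have lbp: "\<forall>g\<in>J. ad d0 - bd d0 \<le> p g"
  proof
    fix g assume g: "g \<in> J"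
    show "ad d0 - bd d0 \<le> p g" unfolding p_def using grpA[OF W[OF g d0]] by simp
  qed
  obtain c where c: "\<forall>g\<in>J. c \<le> p g" "\<forall>v. c < v \<longrightarrow> (\<exists>g\<in>J. p g < v)"
    using inf_exists[OF h(2) affs(5) _ lbp] g0 by blast
  have Acell: "linear_cell sm (Suc k) (ext A (\<lambda>x t. lf sm ls1 a1 x < t \<and> t < lf sm ls2 a2 x))"
    by (rule cell_cyl2[OF h(1) aff_lf[OF l1] aff_lf[OF l2] lt])
  show ?thesis
  proof (cases "\<exists>g\<in>J. p g = c")
    case True
    then obtain g1 where g1: "g1 \<in> J" "p g1 = c" by blast
    have "\<forall>g\<in>J. p g - c = 0"
      by (rule rel_open[OF h(2) aff_diff[OF affs(5) aff_const] _ g1(1)]) (use c(1) g1(2) in auto)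
    then have pc: "\<forall>g\<in>J. be g = al g + c" unfolding p_def by (auto simp: algebra_simps)
    have sp1: "sprod (Suc k) (ext A (\<lambda>x t. lf sm ls1 a1 x < t \<and> t < lf sm ls2 a2 x))"
    proof (rule piece[OF h(2-6), where PJ = "\<lambda>g s. s = al g" and PD = "\<lambda>d s. ad d < s \<and> s < bd d + c"
        and S = "\<lambda>x t. al (G x)"])
      show "linear_cell sm (Suc k) (ext J (\<lambda>g s. s = al g))" by (rule cell_graph[OF h(2) affs(1)])
      show "purely_unbounded (Suc k) (ext J (\<lambda>g s. s = al g))" by (rule pu_graph_ext[OF h(3) L(1)])
      have "\<forall>d\<in>D. ad d < bd d + c"
      proof
        fix d assume d: "d \<in> D"
        show "ad d < bd d + c" using grpB[OF W[OF g1(1) d]] g1(2) unfolding p_def by simp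
      qed
      then show "linear_cell sm (Suc k) (ext D (\<lambda>d s. ad d < s \<and> s < bd d + c))"
        by (rule cell_cyl2[OF h(4) affs(3) aff_add[OF affs(4) aff_const]])
      show "bounded_set (Suc k) (ext D (\<lambda>d s. ad d < s \<and> s < bd d + c))"
        by (rule bounded_cyl2[OF h(5) affs(3) aff_add[OF affs(4) aff_const]])
      show "aff (Suc k) (\<lambda>y. al (G (butlast y)))" by (rule aff_butlast[OF aff_comp[OF affs(1) L(3)]])
      show "linear_cell sm (Suc k) (ext A (\<lambda>x t. lf sm ls1 a1 x < t \<and> t < lf sm ls2 a2 x))" by (rule Acell)
    next
      fix x t s s' assume "s = al (G x)"
      then show "al (G x) = s" by simp
    next
      fix x t assume x: "x \<in> A"
      have e2: "lf sm ls2 a2 x = al (G x) + (bd (map2 (-) x (G x)) + c)"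
        using split[OF x] pc GD[OF x] by (simp add: algebra_simps)
      show "(lf sm ls1 a1 x < t \<and> t < lf sm ls2 a2 x) \<longleftrightarrow>
        (\<exists>s s'. s = al (G x) \<and> (ad (map2 (-) x (G x)) < s' \<and> s' < bd (map2 (-) x (G x)) + c) \<and> t = s + s')"
        using shift3[of "ad (map2 (-) x (G x))" "bd (map2 (-) x (G x)) + c" t "al (G x)"] split[OF x] e2 by auto
    qed
    show ?thesis
      by (intro exI[of _ "{ext A (\<lambda>x t. lf sm ls1 a1 x < t \<and> t < lf sm ls2 a2 x)}"]) (use sp1 in auto)
  next
    case False
    then have pc: "\<forall>g\<in>J. c < p g" using c(1) by (auto simp: order.order_iff_strict)
    have qc0: "\<forall>d\<in>D. 0 \<le> (bd d - ad d) + c"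
    proof (rule ballI, rule ccontr)
      fix d assume d: "d \<in> D" and n: "\<not> 0 \<le> (bd d - ad d) + c"
      then have "c < - (bd d - ad d)" by (simp add: algebra_simps not_le less_diff_eq)
      then obtain g where g: "g \<in> J" "p g < - (bd d - ad d)" using c(2) by blast
      show False using grpC[OF W[OF g(1) d]] g(2) unfolding p_def by blast
    qed
    have punb: "\<exists>g\<in>J. B < p g" for B
    proof (rule ccontr)
      assume "\<not> (\<exists>g\<in>J. B < p g)"
      then have "\<forall>g\<in>J. c \<le> p g \<and> p g \<le> B" using c(1) by (auto simp: not_less)
      then have const: "\<forall>g\<in>J. p g = p g0" using pu_img[OF h(2) h(3) affs(5) _ g0] by blast
      obtain v where v: "c < v" "v < p g0" using dense_ex pc g0 by blast
      then obtain g where "g \<in> J" "p g < v" using c(2) by blast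
      then show False using const v by auto
    qed
    have pJ: "\<forall>g\<in>J. al g < be g - c" using pc grpF unfolding p_def by blast
    have Jcell: "linear_cell sm (Suc k) (ext J (\<lambda>g s. al g < s \<and> s < be g - c))"
      by (rule cell_cyl2[OF h(2) affs(1) aff_diff[OF affs(2) aff_const] pJ])
    have Jpu: "purely_unbounded (Suc k) (ext J (\<lambda>g s. al g < s \<and> s < be g - c))"
    proof (rule pu_cyl_ext[OF h(3) L(1)])
      show "\<forall>g\<in>J. \<exists>s. al g < s \<and> s < be g - c" using pJ dense_ex by blast
      show "\<forall>N\<ge>0. \<exists>g\<in>J. \<exists>s1 s2. (al g < s1 \<and> s1 < be g - c) \<and> (al g < s2 \<and> s2 < be g - c) \<and> s1 + N < s2"
      proof (intro allI impI)
        fix N :: 'm assume N: "0 \<le> N"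
        obtain g where g: "g \<in> J" "c + (e + N + e) < p g" using punb by blast
        have "al g + (e + N + e) < be g - c" using grpD[OF g(2)[unfolded p_def]] .
        then have "(al g < al g + e \<and> al g + e < be g - c) \<and> (al g < al g + (e + N + e) \<and> al g + (e + N + e) < be g - c)
           \<and> (al g + e) + N < al g + (e + N + e)" by (rule wid[OF e N])
        then show "\<exists>g\<in>J. \<exists>s1 s2. (al g < s1 \<and> s1 < be g - c) \<and> (al g < s2 \<and> s2 < be g - c) \<and> s1 + N < s2"
          using g(1) by blast
      qed
    qed
    have Saff1: "aff (Suc k) (\<lambda>y. last y - ad (map2 (-) (butlast y) (G (butlast y))))"
      by (rule aff_diff[OF aff_last aff_butlast[OF aff_comp[OF affs(3) vsub_affv[OF L(3)]]]])
    show ?thesis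
    proof (cases "\<exists>d\<in>D. (bd d - ad d) + c = 0")
      case True
      then obtain d1 where d1: "d1 \<in> D" "(bd d1 - ad d1) + c = 0" by blast
      have "\<forall>d\<in>D. (bd d - ad d) + c = 0"
        by (rule rel_open[OF h(4) aff_add[OF aff_diff[OF affs(4) affs(3)] aff_const] qc0 d1(1) d1(2)])
      then have qd: "\<forall>d\<in>D. bd d = ad d - c" using grpG by blast
      have sp1: "sprod (Suc k) (ext A (\<lambda>x t. lf sm ls1 a1 x < t \<and> t < lf sm ls2 a2 x))"
      proof (rule piece[OF h(2-6) Jcell Jpu, where PD = "\<lambda>d s. s = ad d"
          and S = "\<lambda>x t. t - ad (map2 (-) x (G x))"])
        show "linear_cell sm (Suc k) (ext D (\<lambda>d s. s = ad d))" by (rule cell_graph[OF h(4) affs(3)])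
        show "bounded_set (Suc k) (ext D (\<lambda>d s. s = ad d))" by (rule bounded_graph[OF h(5) affs(3)])
        show "aff (Suc k) (\<lambda>y. last y - ad (map2 (-) (butlast y) (G (butlast y))))" by (rule Saff1)
        show "linear_cell sm (Suc k) (ext A (\<lambda>x t. lf sm ls1 a1 x < t \<and> t < lf sm ls2 a2 x))" by (rule Acell)
      next
        fix x t s s' assume "s' = ad (map2 (-) x (G x))" "t = s + s'"
        then show "t - ad (map2 (-) x (G x)) = s" by simp
      next
        fix x t assume x: "x \<in> A"
        have e2: "lf sm ls2 a2 x = (be (G x) - c) + ad (map2 (-) x (G x))"
          using split[OF x] qd GD[OF x] by (simp add: algebra_simps)
        show "(lf sm ls1 a1 x < t \<and> t < lf sm ls2 a2 x) \<longleftrightarrow>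
          (\<exists>s s'. (al (G x) < s \<and> s < be (G x) - c) \<and> s' = ad (map2 (-) x (G x)) \<and> t = s + s')"
          using shift2[of "al (G x)" "be (G x) - c" t "ad (map2 (-) x (G x))"] split[OF x] e2 by auto
      qed
      show ?thesis
        by (intro exI[of _ "{ext A (\<lambda>x t. lf sm ls1 a1 x < t \<and> t < lf sm ls2 a2 x)}"]) (use sp1 in auto)
    next
      case False
      then have qc: "\<forall>d\<in>D. ad d < bd d + c" using qc0 grpE by (metis order.order_iff_strict)
      define m where "m x = lf sm ls1 a1 x + p (G x) - c" for x
      have maff: "aff k m" unfolding m_def
        by (rule aff_diff[OF aff_add[OF aff_lf[OF l1] aff_comp[OF affs(5) L(3)]] aff_const])
      have mx: "m x = (be (G x) - c) + ad (map2 (-) x (G x))" if "x \<in> A" for x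
        using split[OF that] unfolding m_def p_def by (simp add: algebra_simps)
      have lm: "lf sm ls1 a1 x < m x" if x: "x \<in> A" for x
      proof -
        have "al (G x) < be (G x) - c" using pJ GD[OF x] by blast
        then show ?thesis using split[OF x] mx[OF x] by (simp add: add_strict_right_mono)
      qed
      have mu: "m x < lf sm ls2 a2 x" if x: "x \<in> A" for x
      proof -
        have "ad (map2 (-) x (G x)) < bd (map2 (-) x (G x)) + c" using qc GD[OF x] by blast
        then have "(be (G x) - c) + ad (map2 (-) x (G x)) < (be (G x) - c) + (bd (map2 (-) x (G x)) + c)"
          by (rule add_strict_left_mono)
        moreover have e3: "(be (G x) - c) + (bd (map2 (-) x (G x)) + c) = lf sm ls2 a2 x"
          using split[OF x] by (simp add: algebra_simps)
        ultimately show ?thesis unfolding e3 mx[OF x, symmetric] by blast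
      qed
      let ?P1 = "ext A (\<lambda>x t. lf sm ls1 a1 x < t \<and> t < m x)"
      let ?P2 = "ext A (\<lambda>x t. t = m x)"
      let ?P3 = "ext A (\<lambda>x t. m x < t \<and> t < lf sm ls2 a2 x)"
      have Jg: "linear_cell sm (Suc k) (ext J (\<lambda>g s. s = be g - c))"
        by (rule cell_graph[OF h(2) aff_diff[OF affs(2) aff_const]])
      have Jgpu: "purely_unbounded (Suc k) (ext J (\<lambda>g s. s = be g - c))" by (rule pu_graph_ext[OF h(3) L(1)])
      have SaffG: "aff (Suc k) (\<lambda>y. be (G (butlast y)) - c)"
        by (rule aff_butlast[OF aff_comp[OF aff_diff[OF affs(2) aff_const] L(3)]])
      have s1: "sprod (Suc k) ?P1"
      proof (rule piece[OF h(2-6) Jcell Jpu, where PD = "\<lambda>d s. s = ad d"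
          and S = "\<lambda>x t. t - ad (map2 (-) x (G x))"])
        show "linear_cell sm (Suc k) (ext D (\<lambda>d s. s = ad d))" by (rule cell_graph[OF h(4) affs(3)])
        show "bounded_set (Suc k) (ext D (\<lambda>d s. s = ad d))" by (rule bounded_graph[OF h(5) affs(3)])
        show "aff (Suc k) (\<lambda>y. last y - ad (map2 (-) (butlast y) (G (butlast y))))" by (rule Saff1)
        show "linear_cell sm (Suc k) ?P1" by (rule cell_cyl2[OF h(1) aff_lf[OF l1] maff]) (use lm in blast)
      next
        fix x t s s' assume "s' = ad (map2 (-) x (G x))" "t = s + s'"
        then show "t - ad (map2 (-) x (G x)) = s" by simp
      next
        fix x t assume x: "x \<in> A"
        show "(lf sm ls1 a1 x < t \<and> t < m x) \<longleftrightarrow>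
          (\<exists>s s'. (al (G x) < s \<and> s < be (G x) - c) \<and> s' = ad (map2 (-) x (G x)) \<and> t = s + s')"
          using shift2[of "al (G x)" "be (G x) - c" t "ad (map2 (-) x (G x))"] split[OF x] mx[OF x] by auto
      qed
      have s2: "sprod (Suc k) ?P2"
      proof (rule piece[OF h(2-6) Jg Jgpu, where PD = "\<lambda>d s. s = ad d"
          and S = "\<lambda>x t. be (G x) - c"])
        show "linear_cell sm (Suc k) (ext D (\<lambda>d s. s = ad d))" by (rule cell_graph[OF h(4) affs(3)])
        show "bounded_set (Suc k) (ext D (\<lambda>d s. s = ad d))" by (rule bounded_graph[OF h(5) affs(3)])
        show "aff (Suc k) (\<lambda>y. be (G (butlast y)) - c)" by (rule SaffG)
        show "linear_cell sm (Suc k) ?P2" by (rule cell_graph[OF h(1) maff])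
      next
        fix x t s s' assume "s = be (G x) - c"
        then show "be (G x) - c = s" by simp
      next
        fix x t assume x: "x \<in> A"
        show "(t = m x) \<longleftrightarrow> (\<exists>s s'. s = be (G x) - c \<and> s' = ad (map2 (-) x (G x)) \<and> t = s + s')"
          using mx[OF x] by auto
      qed
      have s3: "sprod (Suc k) ?P3"
      proof (rule piece[OF h(2-6) Jg Jgpu, where PD = "\<lambda>d s. ad d < s \<and> s < bd d + c"
          and S = "\<lambda>x t. be (G x) - c"])
        show "linear_cell sm (Suc k) (ext D (\<lambda>d s. ad d < s \<and> s < bd d + c))"
          by (rule cell_cyl2[OF h(4) affs(3) aff_add[OF affs(4) aff_const] qc])
        show "bounded_set (Suc k) (ext D (\<lambda>d s. ad d < s \<and> s < bd d + c))"
          by (rule bounded_cyl2[OF h(5) affs(3) aff_add[OF affs(4) aff_const]])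
        show "aff (Suc k) (\<lambda>y. be (G (butlast y)) - c)" by (rule SaffG)
        show "linear_cell sm (Suc k) ?P3" by (rule cell_cyl2[OF h(1) maff aff_lf[OF l2]]) (use mu in blast)
      next
        fix x t s s' assume "s = be (G x) - c"
        then show "be (G x) - c = s" by simp
      next
        fix x t assume x: "x \<in> A"
        have e2: "lf sm ls2 a2 x = (be (G x) - c) + (bd (map2 (-) x (G x)) + c)"
          using split[OF x] by (simp add: algebra_simps)
        show "(m x < t \<and> t < lf sm ls2 a2 x) \<longleftrightarrow>
          (\<exists>s s'. s = be (G x) - c \<and> (ad (map2 (-) x (G x)) < s' \<and> s' < bd (map2 (-) x (G x)) + c) \<and> t = s + s')"
          using shift3[of "ad (map2 (-) x (G x))" "bd (map2 (-) x (G x)) + c" t "be (G x) - c"] mx[OF x] e2 by auto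
      qed
      have un: "?P1 \<union> ?P2 \<union> ?P3 = ext A (\<lambda>x t. lf sm ls1 a1 x < t \<and> t < lf sm ls2 a2 x)"
      proof -
        have "?P1 \<union> ?P2 \<union> ?P3 = ext A (\<lambda>x t. (lf sm ls1 a1 x < t \<and> t < m x) \<or> t = m x \<or> (m x < t \<and> t < lf sm ls2 a2 x))"
          by (simp only: ext_Un_pred Un_assoc)
        also have "\<dots> = ext A (\<lambda>x t. lf sm ls1 a1 x < t \<and> t < lf sm ls2 a2 x)"
        proof (rule ext_cong)
          fix x t assume x: "x \<in> A"
          show "((lf sm ls1 a1 x < t \<and> t < m x) \<or> t = m x \<or> (m x < t \<and> t < lf sm ls2 a2 x)) =
            (lf sm ls1 a1 x < t \<and> t < lf sm ls2 a2 x)" by (rule ord3[OF lm[OF x] mu[OF x]])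
        qed
        finally show ?thesis .
      qed
      have d12: "?P1 \<inter> ?P2 = {}" unfolding ext_Int_pred by (rule ext_empty) (blast dest: less_imp_neq)
      have d13: "?P1 \<inter> ?P3 = {}" unfolding ext_Int_pred by (rule ext_empty) (meson less_asym)
      have d23: "?P2 \<inter> ?P3 = {}" unfolding ext_Int_pred by (rule ext_empty) (blast dest: less_imp_neq)
      have d21: "?P2 \<inter> ?P1 = {}" using d12 by (simp only: Int_commute)
      have d31: "?P3 \<inter> ?P1 = {}" using d13 by (simp only: Int_commute)
      have d32: "?P3 \<inter> ?P2 = {}" using d23 by (simp only: Int_commute)
      show ?thesis
      proof (intro exI[of _ "{?P1, ?P2, ?P3}"] conjI)
        show "finite {?P1, ?P2, ?P3}" by simp
        show "\<Union>{?P1, ?P2, ?P3} = ext A (\<lambda>x t. lf sm ls1 a1 x < t \<and> t < lf sm ls2 a2 x)"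
          using un by (simp only: Union_insert Union_empty Un_empty_right Un_assoc)
        show "\<forall>P1\<in>{?P1, ?P2, ?P3}. \<forall>P2\<in>{?P1, ?P2, ?P3}. P1 \<noteq> P2 \<longrightarrow> P1 \<inter> P2 = {}"
          using d12 d13 d23 d21 d31 d32 by (simp only: ball_simps insert_iff empty_iff) blast
        show "\<forall>B\<in>{?P1, ?P2, ?P3}. sprod (Suc k) B" using s1 s2 s3 by (simp only: ball_simps)
      qed
    qed
  qed
qed

end


lemma pu_rep: "purely_unbounded n {replicate n (0::'a::linordered_ab_group_add)}"
proof (induction n)
  case 0 then show ?case by simp
next
  case (Suc n)
  have r: "replicate (Suc n) (0::'a) = replicate n 0 @ [0]" by (simp add: replicate_append_same)
  have "butlast ` {replicate (Suc n) (0::'a)} = {replicate n 0}" unfolding r by simp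
  moreover have "is_graph {replicate (Suc n) (0::'a)}" unfolding is_graph_def by simp
  ultimately show ?case using Suc by simp
qed

lemma refine:
  assumes P: "finite P" "\<Union>P = X" "\<forall>A\<in>P. \<forall>B\<in>P. A \<noteq> B \<longrightarrow> A \<inter> B = {}"
    and Q: "\<forall>A\<in>P. \<exists>Q. finite Q \<and> \<Union>Q = ext A R \<and> (\<forall>B1\<in>Q. \<forall>B2\<in>Q. B1 \<noteq> B2 \<longrightarrow> B1 \<inter> B2 = {}) \<and> (\<forall>B\<in>Q. S B)"
  shows "\<exists>P'. finite P' \<and> \<Union>P' = ext X R \<and> (\<forall>A\<in>P'. \<forall>B\<in>P'. A \<noteq> B \<longrightarrow> A \<inter> B = {}) \<and> (\<forall>B\<in>P'. S B)"
proof -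
  from bchoice[OF Q] obtain f where f: "\<forall>A\<in>P. finite (f A) \<and> \<Union>(f A) = ext A R \<and> (\<forall>B1\<in>f A. \<forall>B2\<in>f A. B1 \<noteq> B2 \<longrightarrow> B1 \<inter> B2 = {}) \<and> (\<forall>B\<in>f A. S B)" ..
  have f1: "finite (f A)" if "A \<in> P" for A using f that by blast
  have f2: "\<Union>(f A) = ext A R" if "A \<in> P" for A using f that by blast
  have f3: "\<forall>B1\<in>f A. \<forall>B2\<in>f A. B1 \<noteq> B2 \<longrightarrow> B1 \<inter> B2 = {}" if "A \<in> P" for A using f that by blast
  have f4: "\<forall>B\<in>f A. S B" if "A \<in> P" for A using f that by blast
  show ?thesis
  proof (intro exI[of _ "\<Union>(f ` P)"] conjI)
    show "finite (\<Union>(f ` P))" using P(1) f1 by (intro finite_Union finite_imageI) auto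
    show "\<Union>(\<Union>(f ` P)) = ext X R"
    proof -
      have "\<Union>(\<Union>(f ` P)) = (\<Union>A\<in>P. \<Union>(f A))" by blast
      also have "\<dots> = (\<Union>A\<in>P. ext A R)" by (rule SUP_cong) (simp_all add: f2)
      also have "\<dots> = ext (\<Union>P) R" by (rule ext_Union[symmetric])
      finally show ?thesis using P(2) by simp
    qed
    show "\<forall>A\<in>\<Union>(f ` P). \<forall>B\<in>\<Union>(f ` P). A \<noteq> B \<longrightarrow> A \<inter> B = {}"
    proof (intro ballI impI)
      fix B1 B2 assume b1: "B1 \<in> \<Union>(f ` P)" and b2: "B2 \<in> \<Union>(f ` P)" and ne: "B1 \<noteq> B2"
      obtain A1 where a1: "A1 \<in> P" "B1 \<in> f A1" using b1 by blast
      obtain A2 where a2: "A2 \<in> P" "B2 \<in> f A2" using b2 by blast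
      show "B1 \<inter> B2 = {}"
      proof (cases "A1 = A2")
        case True then show ?thesis using f3[OF a1(1)] a1(2) a2(2) ne by blast
      next
        case False
        then have "A1 \<inter> A2 = {}" using P(3) a1(1) a2(1) by blast
        then have "ext A1 R \<inter> ext A2 R = {}" unfolding ext_Int by (simp add: ext_def)
        moreover have "B1 \<subseteq> ext A1 R" using f2[OF a1(1)] a1(2) by blast
        moreover have "B2 \<subseteq> ext A2 R" using f2[OF a2(1)] a2(2) by blast
        ultimately show ?thesis by blast
      qed
    qed
    show "\<forall>B\<in>\<Union>(f ` P). S B" using f4 by blast
  qed
qed

context ovs2 begin

lemma single_Q: "sprod k B \<Longrightarrow> \<exists>Q. finite Q \<and> \<Union>Q = B \<and> (\<forall>B1\<in>Q. \<forall>B2\<in>Q. B1 \<noteq> B2 \<longrightarrow> B1 \<inter> B2 = {}) \<and> (\<forall>B\<in>Q. sprod k B)"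
  by (intro exI[of _ "{B}"]) auto

lemma sprod_zero: "sprod 0 {[]}"
proof -
  have cell: "linear_cell sm 0 {[]}" by (rule linear_cell.zero)
  have m: "msum {[]} {[]} = {[]::'m list}" unfolding msum_def by auto
  have u: "\<exists>!p. fst p \<in> {[]} \<and> snd p \<in> {[]} \<and> ([]::'m list) = map2 (+) (fst p) (snd p)"
    by (rule ex1I[of _ "([], [])"]) (auto simp: prod_eq_iff)
  have sd: "sdata 0 {[]} {[]} (\<lambda>_. []) {[]}"
    unfolding sdata_def affv_def using m u by simp
  have b: "bounded_set 0 {[]::'m list}" unfolding bounded_set_def by simp
  have pu: "purely_unbounded 0 {[]::'m list}" by simp
  show ?thesis unfolding sprod_def using cell sd b pu by blast
qed

lemma main_ind: "linear_cell sm n C \<Longrightarrow>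
  \<exists>P. finite P \<and> \<Union>P = C \<and> (\<forall>A\<in>P. \<forall>B\<in>P. A \<noteq> B \<longrightarrow> A \<inter> B = {}) \<and> (\<forall>A\<in>P. sprod n A)"
proof (induction rule: linear_cell.induct)
  case zero
  show ?case by (intro exI[of _ "{{[]}}"]) (auto simp: sprod_zero)
next
  case (graph k X ls a)
  obtain P where P: "finite P" "\<Union>P = X" "\<forall>A\<in>P. \<forall>B\<in>P. A \<noteq> B \<longrightarrow> A \<inter> B = {}" "\<forall>A\<in>P. sprod k A"
    using graph.IH by blast
  have "\<exists>P'. finite P' \<and> \<Union>P' = ext X (\<lambda>x t. t = lf sm ls a x) \<and> (\<forall>A\<in>P'. \<forall>B\<in>P'. A \<noteq> B \<longrightarrow> A \<inter> B = {}) \<and> (\<forall>B\<in>P'. sprod (Suc k) B)"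
  proof (rule refine[OF P(1-3)])
    show "\<forall>A\<in>P. \<exists>Q. finite Q \<and> \<Union>Q = ext A (\<lambda>x t. t = lf sm ls a x) \<and> (\<forall>B1\<in>Q. \<forall>B2\<in>Q. B1 \<noteq> B2 \<longrightarrow> B1 \<inter> B2 = {}) \<and> (\<forall>B\<in>Q. sprod (Suc k) B)"
      using P(4) piece_graph[OF _ graph.hyps(2)] single_Q by blast
  qed
  then show ?case unfolding cell_graph_ext .
next
  case (cyl k X lo hi)
  obtain P where P: "finite P" "\<Union>P = X" "\<forall>A\<in>P. \<forall>B\<in>P. A \<noteq> B \<longrightarrow> A \<inter> B = {}" "\<forall>A\<in>P. sprod k A"
    using cyl.IH by blast
  let ?R = "\<lambda>x t. lower_ok sm lo x t \<and> upper_ok sm hi x t"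
  have "\<exists>P'. finite P' \<and> \<Union>P' = ext X ?R \<and> (\<forall>A\<in>P'. \<forall>B\<in>P'. A \<noteq> B \<longrightarrow> A \<inter> B = {}) \<and> (\<forall>B\<in>P'. sprod (Suc k) B)"
  proof (rule refine[OF P(1-3)], rule ballI)
    fix A assume A: "A \<in> P"
    have sA: "sprod k A" using P(4) A by blast
    have AX: "A \<subseteq> X" using P(2) A by blast
    show "\<exists>Q. finite Q \<and> \<Union>Q = ext A ?R \<and> (\<forall>B1\<in>Q. \<forall>B2\<in>Q. B1 \<noteq> B2 \<longrightarrow> B1 \<inter> B2 = {}) \<and> (\<forall>B\<in>Q. sprod (Suc k) B)"
    proof (cases lo)
      case None
      show ?thesis
      proof (cases hi)
        case None
        have "ext A ?R = ext A (\<lambda>x t. True)" using \<open>lo = None\<close> None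
          by (intro ext_cong) (simp add: lower_ok_def upper_ok_def)
        then show ?thesis using single_Q[OF piece_none[OF sA]] by simp
      next
        case (Some q)
        obtain ls a where q: "q = (ls, a)" by (cases q) blast
        have l: "length ls = k" using cyl.hyps(3) Some q by simp
        have "ext A ?R = ext A (\<lambda>x t. t < lf sm ls a x)" using \<open>lo = None\<close> Some q
          by (intro ext_cong) (simp add: lower_ok_def upper_ok_def)
        then show ?thesis using single_Q[OF piece_hi[OF sA l]] by simp
      qed
    next
      case (Some q1)
      obtain ls1 a1 where q1: "q1 = (ls1, a1)" by (cases q1) blast
      have l1: "length ls1 = k" using cyl.hyps(2) Some q1 by simp
      show ?thesis
      proof (cases hi)
        case None
        have "ext A ?R = ext A (\<lambda>x t. lf sm ls1 a1 x < t)" using Some q1 None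
          by (intro ext_cong) (simp add: lower_ok_def upper_ok_def)
        then show ?thesis using single_Q[OF piece_lo[OF sA l1]] by simp
      next
        case (Some q2)
        obtain ls2 a2 where q2: "q2 = (ls2, a2)" by (cases q2) blast
        have l2: "length ls2 = k" using cyl.hyps(3) Some q2 by simp
        have "ext A ?R = ext A (\<lambda>x t. lf sm ls1 a1 x < t \<and> t < lf sm ls2 a2 x)" using \<open>lo = Some q1\<close> q1 Some q2
          by (intro ext_cong) (simp add: lower_ok_def upper_ok_def)
        moreover have "\<forall>x\<in>A. lf sm ls1 a1 x < lf sm ls2 a2 x"
          using cyl.hyps(4) AX \<open>lo = Some q1\<close> q1 Some q2 by (auto simp: bounds_lt_def)
        ultimately show ?thesis using piece_both[OF sA l1 l2] by simp
      qed
    qed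
  qed
  then show ?case unfolding cell_cyl_ext .
qed

end

theorem propositionA2:
  fixes sm :: "'k::{division_ring,linordered_ring_strict} \<Rightarrow> 'm::linordered_ab_group_add \<Rightarrow> 'm"
  assumes "ordered_vector_space sm"
    and "linear_cell sm n C"
  shows "\<exists>P. finite P \<and> \<Union>P = C \<and> (\<forall>A\<in>P. \<forall>B\<in>P. A \<noteq> B \<longrightarrow> A \<inter> B = {}) \<and>
             (\<forall>A\<in>P. product_cell sm n A)"
proof (cases "\<exists>e::'m. 0 < e")
  case True
  have o: "ovs2 sm" unfolding ovs2_def ovs2_axioms_def ovs_def using assms(1) True by (intro conjI)
  obtain P where P: "finite P" "\<Union>P = C" "\<forall>A\<in>P. \<forall>B\<in>P. A \<noteq> B \<longrightarrow> A \<inter> B = {}" "\<forall>A\<in>P. ovs2.sprod sm n A"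
    using ovs2.main_ind[OF o assms(2)] by blast
  have "\<forall>A\<in>P. product_cell sm n A"
  proof
    fix A assume "A \<in> P"
    then have "ovs2.sprod sm n A" using P(4) by blast
    then show "product_cell sm n A" by (rule ovs2.sprod_product[OF o])
  qed
  then show ?thesis using P(1-3) by blast
next
  case False
  have z: "x = 0" for x :: 'm
  proof (rule ccontr)
    assume "x \<noteq> 0"
    then have "x < 0 \<or> 0 < x" by (simp add: neq_iff)
    then have "0 < - x \<or> 0 < x" by simp
    then show False using False by blast
  qed
  have len: "\<forall>x\<in>C. length x = n" using cell_len[OF assms(2)] by blast
  have Csub: "C \<subseteq> {replicate n 0}"
  proof
    fix x assume "x \<in> C"
    then have "length x = n" using len by blast
    moreover have "\<forall>i<n. x ! i = 0" using z by blast
    ultimately have "x = replicate n 0" by (simp add: list_eq_iff_nth_eq)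
    then show "x \<in> {replicate n 0}" by simp
  qed
  show ?thesis
  proof (cases "C = {}")
    case True then show ?thesis by (intro exI[of _ "{}"]) simp
  next
    case False
    then have Ce: "C = {replicate n 0}" using Csub by blast
    have pu: "purely_unbounded n C" unfolding Ce by (rule pu_rep)
    have bd: "bounded_set n C" unfolding bounded_set_def Ce by (intro conjI exI[of _ 0]) auto
    have mm: "map2 (+) (replicate n 0) (replicate n 0) = replicate n (0::'m)" by (simp add: zip_replicate)
    have ms: "C = msum C C" unfolding Ce msum_def using mm by auto
    have un: "\<forall>c\<in>C. \<exists>!p. fst p \<in> C \<and> snd p \<in> C \<and> c = map2 (+) (fst p) (snd p)"
    proof
      fix c assume "c \<in> C"
      then have c: "c = replicate n 0" using Ce by blast
      show "\<exists>!p. fst p \<in> C \<and> snd p \<in> C \<and> c = map2 (+) (fst p) (snd p)"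
      proof (rule ex1I[of _ "(replicate n 0, replicate n 0)"])
        show "fst (replicate n 0, replicate n 0) \<in> C \<and> snd (replicate n 0, replicate n (0::'m)) \<in> C \<and>
          c = map2 (+) (fst (replicate n 0, replicate n 0)) (snd (replicate n 0, replicate n 0))"
          using Ce c mm by simp
      next
        fix p assume "fst p \<in> C \<and> snd p \<in> C \<and> c = map2 (+) (fst p) (snd p)"
        then have "fst p = replicate n 0" "snd p = replicate n 0" using Ce by blast+
        then show "p = (replicate n 0, replicate n 0)" by (simp add: prod_eq_iff)
      qed
    qed
    have pc: "product_cell sm n C" unfolding product_cell_def using assms(2) pu bd ms un by blast
    show ?thesis using pc by (intro exI[of _ "{C}"]) auto
  qed
qed


end
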